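(* In the standing setup, let $y_0\in P$ and let $J$ be a $q$-periodic interval of $F_{y_0}$ with midpoint $c$; let $X^*=\{T_0^k(c,y_0)\}_{k=0}^{q-1}$ be the corresponding symmetric periodic orbit of $T_0$. Let $\gamma_A,\gamma_B$ each be one of the curves $y\mapsto(0,y)$, $y\mapsto(\tfrac12,y)$ (type $0$) or $y\mapsto(m_i(y),y)$ for some $i$ (type $-1$), and let $n_A,n_B\ge 0$ be integers; set $j_A=2n_A$ if $\gamma_A$ is of type $0$ and $j_A=2n_A-1$ if of type $-1$, and similarly $j_B$, and assume $|j_A-j_B|=q$. Suppose there are $y_A,y_B\in P$ with $T_0^{n_A}(\gamma_A(y_A))=T_0^{n_B}(\gamma_B(y_B))=p^*\in X^*$; that for $0\le k<n_A$ the index of the elemental subinterval containing the $x$-coordinate of $T_\varepsilon^k(\gamma_A(y))$ is locally constant in $(y,\varepsilon)$ near $(y_A,0)$, and similarly for $B$ near $(y_B,0)$; and that the tangent vectors $\frac{d}{dy}T_0^{n_A}(\gamma_A(y))|_{y=y_A}$ and $\frac{d}{dy}T_0^{n_B}(\gamma_B(y))|_{y=y_B}$ are linearly independent. Then there exist $\varepsilon_0>0$ and a neighborhood $U$ of $p^*$ such that for all $|\varepsilon|<\varepsilon_0$ the curves $y\mapsto T_\varepsilon^{n_A}(\gamma_A(y))$ and $y\mapsto T_\varepsilon^{n_B}(\gamma_B(y))$ (for $y$ near $y_A$, resp. $y_B$) intersect in $U$ in exactly one point $p_\varepsilon$; $p_\varepsilon$ depends continuously on $\varepsilon$ with $p_0=p^*$,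 and $p_\varepsilon$ lies on a symmetric periodic orbit of $T_\varepsilon$ of minimal period $q$.
   Context: Standing setup (perturbed symmetric FIEM): identify $[0,1)$ with $\mathbb{S}^1=\mathbb{R}/\mathbb{Z}$. Fix $d\ge 2$ and an open interval $P\subset\mathbb{R}$. For $y\in P$ let $\lambda(y)=(\lambda_1(y),\dots,\lambda_d(y))$ with $\lambda_i(y)>0$, $\sum_i\lambda_i(y)=1$, each $\lambda_i$ smooth. Put $a_i(y)=\sum_{j<i}\lambda_j(y)$, elemental subintervals $J_i(y)=[a_i(y),a_i(y)+\lambda_i(y))$, midpoints $m_i(y)=a_i(y)+\lambda_i(y)/2$, and $\omega_i(y)=\sum_{j>i}\lambda_j(y)-\sum_{j<i}\lambda_j(y)$ (so $m_i=(1-\omega_i)/2$). The symmetric $d$-IEM is $F_y(x)=x+\omega_i(y)$ for $x\in J_i(y)$. Let $R(x)=-x\bmod 1$ and let $f$ be a smooth $1$-periodic odd function. For $\varepsilon\in\mathbb{R}$, $T_\varepsilon(x,y)=(F_y(x),\,y+\varepsilon f(F_y(x)))$ on $\mathbb{S}^1\times P$ (where defined), $S_\varepsilon(x,y)=(R(x),\,y-\varepsilon f(x))$, and the symmetry lines are $\Gamma_i=\{p: T_\varepsilon^i(S_\varepsilon(p))=p\}$. A $q$-periodic interval of an IEM $F$ is a left-closed right-open interval $J$ such that $q$ is the least positive integer with $F^q(J)=J$, each $F^k(J)$ lies in a single elemental subinterval, and $J$ is maximal with these properties. A periodic orbit $\mathcal{O}$ of $T_\varepsilon$ is symmetric if $S_\varepsilon(\mathcal{O})=\mathcal{O}$.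 *)

theory Defs
  imports "HOL-Analysis.Analysis"
begin

text \<open>Points of the circle S^1 = R/Z are represented by their representative in [0,1).
  Elemental subintervals are indexed by i in {1..d}; lam i y is lambda_i(y).\<close>

definition smooth_on :: "real set \<Rightarrow> (real \<Rightarrow> real) \<Rightarrow> bool" where
  "smooth_on S g \<longleftrightarrow> (\<forall>k. \<forall>x\<in>S. ((deriv ^^ k) g) field_differentiable (at x))"

definition aI :: "(nat \<Rightarrow> real \<Rightarrow> real) \<Rightarrow> nat \<Rightarrow> real \<Rightarrow> real" where
  "aI lam i y = (\<Sum>j\<in>{1..<i}. lam j y)"

definition omegaI :: "(nat \<Rightarrow> real \<Rightarrow> real) \<Rightarrow> nat \<Rightarrow> nat \<Rightarrow> real \<Rightarrow> real" where
  "omegaI lam d i y = (\<Sum>j\<in>{i<..d}. lam j y) - (\<Sum>j\<in>{1..<i}. lam j y)"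

definition midI :: "(nat \<Rightarrow> real \<Rightarrow> real) \<Rightarrow> nat \<Rightarrow> real \<Rightarrow> real" where
  "midI lam i y = aI lam i y + lam i y / 2"

definition elemJ :: "(nat \<Rightarrow> real \<Rightarrow> real) \<Rightarrow> nat \<Rightarrow> real \<Rightarrow> real set" where
  "elemJ lam i y = {aI lam i y ..< aI lam i y + lam i y}"

definition idx :: "(nat \<Rightarrow> real \<Rightarrow> real) \<Rightarrow> nat \<Rightarrow> real \<Rightarrow> real \<Rightarrow> nat" where
  "idx lam d y x = (THE i. i \<in> {1..d} \<and> x \<in> elemJ lam i y)"

definition iem :: "(nat \<Rightarrow> real \<Rightarrow> real) \<Rightarrow> nat \<Rightarrow> real \<Rightarrow> real \<Rightarrow> real" where
  "iem lam d y x = x + omegaI lam d (idx lam d y x) y"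

definition Tmap :: "(nat \<Rightarrow> real \<Rightarrow> real) \<Rightarrow> nat \<Rightarrow> (real \<Rightarrow> real) \<Rightarrow> real
    \<Rightarrow> real \<times> real \<Rightarrow> real \<times> real" where
  "Tmap lam d f eps p = (let x' = iem lam d (snd p) (fst p) in (x', snd p + eps * f x'))"

definition Smap :: "(real \<Rightarrow> real) \<Rightarrow> real \<Rightarrow> real \<times> real \<Rightarrow> real \<times> real" where
  "Smap f eps p = (frac (- fst p), snd p - eps * f (fst p))"

definition per_int_props :: "(nat \<Rightarrow> real \<Rightarrow> real) \<Rightarrow> nat \<Rightarrow> real \<Rightarrow> nat \<Rightarrow> real set \<Rightarrow> bool" where
  "per_int_props lam d y q J \<longleftrightarrow>
     (\<exists>a b. a < b \<and> J = {a..<b}) \<and> 0 < q \<and>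
     (iem lam d y ^^ q) ` J = J \<and>
     (\<forall>k. 0 < k \<and> k < q \<longrightarrow> (iem lam d y ^^ k) ` J \<noteq> J) \<and>
     (\<forall>k. \<exists>i\<in>{1..d}. (iem lam d y ^^ k) ` J \<subseteq> elemJ lam i y)"

definition periodic_interval :: "(nat \<Rightarrow> real \<Rightarrow> real) \<Rightarrow> nat \<Rightarrow> real \<Rightarrow> nat \<Rightarrow> real set \<Rightarrow> bool" where
  "periodic_interval lam d y q J \<longleftrightarrow> per_int_props lam d y q J \<and>
     (\<forall>J'. J \<subset> J' \<longrightarrow> \<not> per_int_props lam d y q J')"

datatype curve = C0 | CHalf | CMid nat

fun gam :: "(nat \<Rightarrow> real \<Rightarrow> real) \<Rightarrow> curve \<Rightarrow> real \<Rightarrow> real \<times> real" where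
  "gam lam C0 y = (0, y)"
| "gam lam CHalf y = (1/2, y)"
| "gam lam (CMid i) y = (midI lam i y, y)"

fun valid_curve :: "nat \<Rightarrow> curve \<Rightarrow> bool" where
  "valid_curve d (CMid i) = (i \<in> {1..d})"
| "valid_curve d _ = True"

fun jval :: "curve \<Rightarrow> nat \<Rightarrow> int" where
  "jval (CMid i) n = 2 * int n - 1"
| "jval _ n = 2 * int n"

text \<open>Embedding of S^1 x R into C x R, giving the topology of the cylinder.\<close>
definition emb :: "real \<times> real \<Rightarrow> complex \<times> real" where
  "emb p = (cis (2 * pi * fst p), snd p)"

definition sym_per_orbit :: "(nat \<Rightarrow> real \<Rightarrow> real) \<Rightarrow> nat \<Rightarrow> (real \<Rightarrow> real) \<Rightarrow> real
    \<Rightarrow> real set \<Rightarrow> nat \<Rightarrow> real \<times> real \<Rightarrow> bool" where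
  "sym_per_orbit lam d f eps P q p \<longleftrightarrow>
     fst p \<in> {0..<1} \<and> 0 < q \<and>
     (Tmap lam d f eps ^^ q) p = p \<and>
     (\<forall>k. 0 < k \<and> k < q \<longrightarrow> (Tmap lam d f eps ^^ k) p \<noteq> p) \<and>
     (\<forall>k<q. snd ((Tmap lam d f eps ^^ k) p) \<in> P) \<and>
     Smap f eps ` {(Tmap lam d f eps ^^ k) p | k. k < q} = {(Tmap lam d f eps ^^ k) p | k. k < q}"

end

theory Submission
  imports Defs
begin

definition intr :: "(nat \<Rightarrow> real \<Rightarrow> real) \<Rightarrow> nat \<Rightarrow> real \<Rightarrow> real \<Rightarrow> bool" where
  "intr lam i y x \<longleftrightarrow> aI lam i y < x \<and> x < aI lam i y + lam i y"

locale iemctx =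
  fixes lam :: "nat \<Rightarrow> real \<Rightarrow> real" and d :: nat and P :: "real set" and f :: "real \<Rightarrow> real"
  assumes P_open: "open P"
    and lam_pos: "\<And>i y. i \<in> {1..d} \<Longrightarrow> y \<in> P \<Longrightarrow> lam i y > 0"
    and lam_sum: "\<And>y. y \<in> P \<Longrightarrow> (\<Sum>i\<in>{1..d}. lam i y) = 1"
    and lam_smooth: "\<And>i. i \<in> {1..d} \<Longrightarrow> smooth_on P (lam i)"
    and f_smooth: "smooth_on UNIV f"
    and f_per: "\<And>x. f (x + 1) = f x"
    and f_odd: "\<And>x. f (- x) = - f x"
begin

lemma split1:
  assumes i: "i \<in> {1..d}" and y: "y \<in> P"
  shows "aI lam i y + lam i y + (\<Sum>j\<in>{i<..d}. lam j y) = 1"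
proof -
  have e: "{1..d} = {1..<i} \<union> ({i} \<union> {i<..d})" using i by auto
  have "(\<Sum>j\<in>{1..d}. lam j y) = (\<Sum>j\<in>{1..<i}. lam j y) + (\<Sum>j\<in>{i} \<union> {i<..d}. lam j y)"
    unfolding e by (rule sum.union_disjoint) auto
  also have "(\<Sum>j\<in>{i} \<union> {i<..d}. lam j y) = lam i y + (\<Sum>j\<in>{i<..d}. lam j y)" by simp
  finally have "(\<Sum>j\<in>{1..d}. lam j y) = (\<Sum>j\<in>{1..<i}. lam j y) + (lam i y + (\<Sum>j\<in>{i<..d}. lam j y))" .
  then show ?thesis using lam_sum[OF y] by (simp add: aI_def)
qed

lemma aI_nonneg: "y \<in> P \<Longrightarrow> i \<le> Suc d \<Longrightarrow> aI lam i y \<ge> 0"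
  unfolding aI_def by (rule sum_nonneg) (auto intro!: less_imp_le lam_pos)

lemma tail_nonneg: "y \<in> P \<Longrightarrow> (\<Sum>j\<in>{i<..d}. lam j y) \<ge> 0"
  by (rule sum_nonneg) (auto intro!: less_imp_le lam_pos)

lemma aI_upper: "i \<in> {1..d} \<Longrightarrow> y \<in> P \<Longrightarrow> aI lam i y + lam i y \<le> 1"
  using split1[of i y] tail_nonneg[of y i] by linarith

lemma aI_mono:
  assumes "i \<in> {1..d}" "j \<in> {1..d}" "i < j" "y \<in> P"
  shows "aI lam i y + lam i y \<le> aI lam j y"
proof -
  have "aI lam i y + lam i y = (\<Sum>k\<in>{1..<Suc i}. lam k y)"
    using assms by (simp add: aI_def sum.atLeastLessThan_Suc)
  also have "\<dots> \<le> (\<Sum>k\<in>{1..<j}. lam k y)"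
    using assms by (intro sum_mono2) (auto intro!: less_imp_le lam_pos)
  finally show ?thesis by (simp add: aI_def)
qed

lemma omega_eq: "i \<in> {1..d} \<Longrightarrow> y \<in> P \<Longrightarrow> omegaI lam d i y = 1 - 2 * aI lam i y - lam i y"
  using split1[of i y] by (simp add: omegaI_def aI_def)

lemma idx_eq:
  assumes i: "i \<in> {1..d}" and y: "y \<in> P" and x: "x \<in> elemJ lam i y"
  shows "idx lam d y x = i"
  unfolding idx_def
proof (rule the_equality)
  show "i \<in> {1..d} \<and> x \<in> elemJ lam i y" using i x by simp
  fix j assume j: "j \<in> {1..d} \<and> x \<in> elemJ lam j y"
  show "j = i"
  proof (rule ccontr)
    assume "j \<noteq> i"
    then consider "i < j" | "j < i" by linarith
    then show False
    proof cases
      case 1 then show False using aI_mono[OF i _ 1 y] j x by (auto simp: elemJ_def)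
    next
      case 2 then show False using aI_mono[OF _ i 2 y] j x by (auto simp: elemJ_def)
    qed
  qed
qed

lemma iem_eq: "i \<in> {1..d} \<Longrightarrow> y \<in> P \<Longrightarrow> x \<in> elemJ lam i y \<Longrightarrow> iem lam d y x = x + omegaI lam d i y"
  by (simp add: iem_def idx_eq)

lemma iem_range:
  assumes "i \<in> {1..d}" "y \<in> P" "x \<in> elemJ lam i y"
  shows "1 - aI lam i y - lam i y \<le> iem lam d y x \<and> iem lam d y x < 1 - aI lam i y"
  using assms iem_eq[OF assms] omega_eq[OF assms(1,2)] by (auto simp: elemJ_def)

lemma elemJ_sub: "i \<in> {1..d} \<Longrightarrow> y \<in> P \<Longrightarrow> x \<in> elemJ lam i y \<Longrightarrow> 0 \<le> x \<and> x < 1"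
  using aI_nonneg[of y i] aI_upper[of i y] by (auto simp: elemJ_def)

lemma iem_01:
  assumes "i \<in> {1..d}" "y \<in> P" "x \<in> elemJ lam i y"
  shows "0 \<le> iem lam d y x \<and> iem lam d y x < 1"
  using iem_range[OF assms] aI_upper[OF assms(1,2)] aI_nonneg[of y i] assms(1,2) lam_pos[OF assms(1,2)]
  by auto

lemma cover:
  assumes y: "y \<in> P" and x: "0 \<le> x" "x < 1" and d1: "d \<ge> 1"
  shows "\<exists>i\<in>{1..d}. x \<in> elemJ lam i y"
proof -
  define S where "S = {j\<in>{1..d}. aI lam j y \<le> x}"
  have fin: "finite S" by (simp add: S_def)
  have "1 \<in> S" using x d1 by (simp add: S_def aI_def)
  then have ne: "S \<noteq> {}" by auto
  define i where "i = Max S"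
  have iS: "i \<in> S" using fin ne by (simp add: i_def)
  have i1: "i \<in> {1..d}" and ax: "aI lam i y \<le> x" using iS by (auto simp: S_def)
  have "x < aI lam i y + lam i y"
  proof (cases "i = d")
    case True
    then show ?thesis using split1[OF i1 y] x by simp
  next
    case False
    then have i1': "Suc i \<in> {1..d}" using i1 by auto
    have "Suc i \<notin> S" using Max_ge[OF fin, of "Suc i"] by (auto simp: i_def)
    then have "x < aI lam (Suc i) y" using i1' by (auto simp: S_def)
    moreover have "aI lam (Suc i) y = aI lam i y + lam i y"
      using i1 by (simp add: aI_def sum.atLeastLessThan_Suc)
    ultimately show ?thesis by simp
  qed
  then show ?thesis using i1 ax by (auto simp: elemJ_def)
qed

lemma iem_inj:
  assumes y: "y \<in> P" and ix: "i \<in> {1..d}" "x \<in> elemJ lam i y" and jx: "j \<in> {1..d}" "x' \<in> elemJ lam j y"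
    and eq: "iem lam d y x = iem lam d y x'"
  shows "x = x'"
proof -
  have A: "i = j"
  proof (rule ccontr)
    assume "i \<noteq> j"
    then consider "i < j" | "j < i" by linarith
    then show False
    proof cases
      case 1 then show False using aI_mono[OF ix(1) jx(1) 1 y] iem_range[OF ix(1) y ix(2)] iem_range[OF jx(1) y jx(2)] eq by auto
    next
      case 2 then show False using aI_mono[OF jx(1) ix(1) 2 y] iem_range[OF ix(1) y ix(2)] iem_range[OF jx(1) y jx(2)] eq by auto
    qed
  qed
  show ?thesis using eq iem_eq[OF ix(1) y ix(2)] iem_eq[OF jx(1) y jx(2)] A by simp
qed


lemma Tmap_simp: "Tmap lam d f e (x, y) = (iem lam d y x, y + e * f (iem lam d y x))"
  by (simp add: Tmap_def Let_def)

lemma Smap_simp: "Smap f e (x, y) = (frac (- x), y - e * f x)"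
  by (simp add: Smap_def)

lemma f0: "f 0 = 0" using f_odd[of 0] by simp

lemma fhalf: "f (1/2) = 0"
proof -
  have "f (1/2) = f (-1/2)" using f_per[of "-1/2"] by simp
  then show ?thesis using f_odd[of "1/2"] by simp
qed

lemma frac_neg: "0 \<le> x \<Longrightarrow> x < 1 \<Longrightarrow> frac (- x) = (if x = 0 then 0 else 1 - x)"
proof (cases "x = 0")
  case False
  assume "0 \<le> x" "x < 1"
  then have "floor (- x) = -1" using False by (simp add: floor_eq_iff)
  then show ?thesis using False by (simp add: frac_def)
qed simp

lemma f_one_minus: "f (1 - x) = - f x"
  using f_per[of "-x"] f_odd[of x] by simp

lemma intr_elemJ: "intr lam i y x \<Longrightarrow> x \<in> elemJ lam i y"
  by (auto simp: intr_def elemJ_def)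

lemma S_invol:
  assumes "0 \<le> fst p" "fst p < 1"
  shows "Smap f e (Smap f e p) = p"
proof (cases p)
  case (Pair x y)
  show ?thesis
  proof (cases "x = 0")
    case True then show ?thesis using Pair by (simp add: Smap_def f0)
  next
    case False
    then have "frac (- x) = 1 - x" using frac_neg[of x] assms Pair by simp
    moreover have "frac (- (1 - x)) = x" using frac_neg[of "1 - x"] assms Pair False by simp
    ultimately show ?thesis using Pair by (simp add: Smap_def f_one_minus)
  qed
qed

lemma S_fix0: "Smap f e (gam lam C0 s) = gam lam C0 s"
  by (simp add: Smap_def f0)

lemma S_fixhalf: "Smap f e (gam lam CHalf s) = gam lam CHalf s"
proof -
  have "frac (- (1/2::real)) = 1/2" using frac_neg[of "1/2"] by simp
  then show ?thesis by (simp add: Smap_def fhalf)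
qed

lemma mid_intr: "i \<in> {1..d} \<Longrightarrow> s \<in> P \<Longrightarrow> intr lam i s (midI lam i s)"
  using lam_pos[of i s] by (simp add: intr_def midI_def)

lemma ST_mid:
  assumes i: "i \<in> {1..d}" and s: "s \<in> P"
  shows "Smap f e (Tmap lam d f e (gam lam (CMid i) s)) = gam lam (CMid i) s"
proof -
  let ?m = "midI lam i s"
  have "iem lam d s ?m = 1 - ?m"
    using iem_eq[OF i s intr_elemJ[OF mid_intr[OF i s]]] omega_eq[OF i s] by (simp add: midI_def)
  moreover have "frac (- (1 - ?m)) = ?m"
    using frac_neg[of "1 - ?m"] mid_intr[OF i s] aI_nonneg[of s i] aI_upper[OF i s] lam_pos[OF i s] i s
    by (auto simp: intr_def)
  ultimately show ?thesis by (simp add: Tmap_simp Smap_simp)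
qed

lemma TST:
  assumes i: "i \<in> {1..d}" and y: "y \<in> P" and x: "intr lam i y x"
  shows "Tmap lam d f e (Smap f e (Tmap lam d f e (x, y))) = Smap f e (x, y)"
proof -
  have xJ: "x \<in> elemJ lam i y" using intr_elemJ[OF x] .
  have a0: "aI lam i y \<ge> 0" using aI_nonneg[of y i] y i by simp
  have a1: "aI lam i y + lam i y \<le> 1" using aI_upper[OF i y] .
  have F1: "iem lam d y x = x + 1 - 2 * aI lam i y - lam i y"
    using iem_eq[OF i y xJ] omega_eq[OF i y] by simp
  define x' where "x' = 1 - x - (1 - 2 * aI lam i y - lam i y)"
  have fr: "frac (- iem lam d y x) = x'"
    using frac_neg[of "iem lam d y x"] F1 x a0 a1 by (auto simp: intr_def x'_def)
  have x'J: "x' \<in> elemJ lam i y" using x by (auto simp: intr_def elemJ_def x'_def)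
  have F2: "iem lam d y x' = 1 - x"
    using iem_eq[OF i y x'J] omega_eq[OF i y] by (simp add: x'_def)
  have fr2: "frac (- x) = 1 - x" using frac_neg[of x] x a0 a1 by (auto simp: intr_def)
  show ?thesis
    by (simp add: Tmap_simp Smap_simp fr F2 fr2 f_one_minus)
qed

end

lemma chain:
  assumes "\<And>i. i < m \<Longrightarrow> T (S (T ((T ^^ i) u))) = S ((T ^^ i) u)"
  shows "S u = (T ^^ m) (S ((T ^^ m) u))"
  using assms
proof (induction m)
  case 0 then show ?case by simp
next
  case (Suc m)
  have "S u = (T ^^ m) (S ((T ^^ m) u))" using Suc by simp
  also have "S ((T ^^ m) u) = T (S (T ((T ^^ m) u)))" using Suc.prems[of m] by simp
  finally show ?case by (simp add: funpow_swap1)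
qed

lemma funpow_mult_fix: "(T ^^ q) p = p \<Longrightarrow> (T ^^ (q * k)) p = p"
proof (induction k)
  case (Suc k)
  then show ?case by (simp add: funpow_add)
qed simp

lemma funpow_mod: "(T ^^ q) p = p \<Longrightarrow> (T ^^ n) p = (T ^^ (n mod q)) p"
proof -
  assume h: "(T ^^ q) p = p"
  have "(T ^^ n) p = (T ^^ (n mod q + q * (n div q))) p" by simp
  also have "\<dots> = (T ^^ (n mod q)) ((T ^^ (q * (n div q))) p)" by (simp only: funpow_add o_def)
  finally show ?thesis using funpow_mult_fix[OF h] by simp
qed

lemma orbit_mem: "0 < q \<Longrightarrow> (T ^^ q) p = p \<Longrightarrow> (T ^^ n) p \<in> {(T ^^ k) p | k. k < q}"
  using funpow_mod[where T=T and q=q and p=p and n=n] by auto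

lemma period_from_rel:
  fixes jA jB :: int
  assumes q: "0 < q" and jq: "\<bar>jA - jB\<bar> = int q"
    and rA: "(jA \<ge> 0 \<and> p = (T ^^ nat jA) (S p)) \<or> (jA = -1 \<and> S p = T p)"
    and rB: "(jB \<ge> 0 \<and> p = (T ^^ nat jB) (S p)) \<or> (jB = -1 \<and> S p = T p)"
  shows "(T ^^ q) p = p"
proof -
  have key: "(T ^^ q) p = p" if q: "0 < q" and jq: "jA - jB = int q"
    and rA: "(jA \<ge> 0 \<and> p = (T ^^ nat jA) (S p)) \<or> (jA = -1 \<and> S p = T p)"
    and rB: "(jB \<ge> 0 \<and> p = (T ^^ nat jB) (S p)) \<or> (jB = -1 \<and> S p = T p)"
    for jA jB
  proof -
    have jA0: "jA \<ge> 0" using jq q rB by linarith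
    then have pA: "p = (T ^^ nat jA) (S p)" using rA by auto
    show ?thesis
    proof (cases "jB \<ge> 0")
      case True
      then have pB: "p = (T ^^ nat jB) (S p)" using rB by auto
      have "nat jA = q + nat jB" using jq True jA0 by linarith
      then have "p = (T ^^ q) ((T ^^ nat jB) (S p))" using pA by (simp add: funpow_add)
      then show ?thesis using pB by simp
    next
      case False
      then have "jB = -1" "S p = T p" using rB by auto
      then have "int (nat jA + 1) = int q" using jq jA0 by simp
      then have "nat jA + 1 = q" by (simp only: of_nat_eq_iff)
      moreover have "(T ^^ (Suc (nat jA))) p = (T ^^ nat jA) (T p)" by (simp only: funpow_Suc_right o_apply)
      then have "p = (T ^^ (nat jA + 1)) p" using pA \<open>S p = T p\<close> by simp
      ultimately show ?thesis by simp
    qed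
  qed
  show ?thesis
  proof (cases "jA \<ge> jB")
    case True then show ?thesis using key[OF q _ rA rB] jq by simp
  next
    case False then show ?thesis using key[OF q _ rB rA] jq by simp
  qed
qed

lemma sym_orbit_abstract:
  assumes q: "0 < q" and per: "(T ^^ q) p = p"
    and tst: "\<And>k. T (S (T ((T ^^ k) p))) = S ((T ^^ k) p)"
    and inv: "\<And>k. S (S ((T ^^ k) p)) = (T ^^ k) p"
    and rel: "(\<exists>j. p = (T ^^ j) (S p)) \<or> S p = T p"
  shows "S ` {(T ^^ k) p | k. k < q} = {(T ^^ k) p | k. k < q}"
proof -
  let ?O = "{(T ^^ k) p | k. k < q}"
  have ch: "S ((T ^^ k) p) = (T ^^ m) (S ((T ^^ (m + k)) p))" for k m
  proof -
    have "S ((T ^^ k) p) = (T ^^ m) (S ((T ^^ m) ((T ^^ k) p)))"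
      by (rule chain) (metis funpow_add o_apply tst)
    then show ?thesis by (simp add: funpow_add)
  qed
  have Sper: "(T ^^ (q * j)) (S p) = S p" for j
  proof -
    have "S p = S ((T ^^ 0) p)" by simp
    also have "\<dots> = (T ^^ (q * j)) (S ((T ^^ (q * j + 0)) p))" by (rule ch)
    finally show ?thesis using funpow_mult_fix[OF per, of j] by simp
  qed
  obtain m0 where m0: "S p = (T ^^ m0) p"
  proof -
    { assume "S p = T p" then have "S p = (T ^^ 1) p" by simp
      then have ?thesis using that by blast }
    moreover
    { fix j assume pj: "p = (T ^^ j) (S p)"
      have "q * j \<ge> j" using q by simp
      then have "(T ^^ (q * j - j)) p = (T ^^ (q * j - j)) ((T ^^ j) (S p))" using pj by simp
      also have "\<dots> = (T ^^ (q * j - j + j)) (S p)" by (simp only: funpow_add o_apply)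
      also have "q * j - j + j = q * j" using \<open>q * j \<ge> j\<close> by simp
      finally have "S p = (T ^^ (q * j - j)) p" using Sper by simp
      then have ?thesis using that by blast }
    ultimately show ?thesis using rel by blast
  qed
  have sub: "S ` ?O \<subseteq> ?O"
  proof
    fix z assume "z \<in> S ` ?O"
    then obtain k where z: "z = S ((T ^^ k) p)" by auto
    have "q * k \<ge> k" using q by simp
    have "z = (T ^^ (q * k - k)) (S ((T ^^ (q * k - k + k)) p))" using ch z by simp
    also have "q * k - k + k = q * k" using \<open>q * k \<ge> k\<close> by simp
    finally have "z = (T ^^ (q * k - k)) (S p)" using funpow_mult_fix[OF per] by simp
    then have "z = (T ^^ (q * k - k + m0)) p" using m0 by (simp add: funpow_add)
    then show "z \<in> ?O" using orbit_mem[OF q per] by simp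
  qed
  moreover have "?O \<subseteq> S ` ?O"
  proof
    fix z assume "z \<in> ?O"
    then obtain k where z: "z = (T ^^ k) p" "k < q" by auto
    then have "S z \<in> ?O" using sub by blast
    moreover have "z = S (S z)" using inv[of k] z by simp
    ultimately show "z \<in> S ` ?O" by (rule rev_image_eqI)
  qed
  ultimately show ?thesis by blast
qed


context iemctx begin

lemma lam_cont: "i \<in> {1..d} \<Longrightarrow> y \<in> P \<Longrightarrow> isCont (lam i) y"
  using lam_smooth[of i] unfolding smooth_on_def
  by (metis funpow_0 field_differentiable_imp_continuous_at)

lemma f_cont: "isCont f x"
  using f_smooth unfolding smooth_on_def
  by (metis funpow_0 field_differentiable_imp_continuous_at UNIV_I)

lemma aI_tendsto:
  assumes Y: "(Y \<longlongrightarrow> y0) F" and y0: "y0 \<in> P" and i: "i \<le> Suc d"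
  shows "((\<lambda>z. aI lam i (Y z)) \<longlongrightarrow> aI lam i y0) F"
  unfolding aI_def
  by (rule tendsto_sum, rule isCont_tendsto_compose[OF lam_cont Y]) (use i y0 in auto)

lemma tail_tendsto:
  assumes Y: "(Y \<longlongrightarrow> y0) F" and y0: "y0 \<in> P"
  shows "((\<lambda>z. (\<Sum>j\<in>{i<..d}. lam j (Y z))) \<longlongrightarrow> (\<Sum>j\<in>{i<..d}. lam j y0)) F"
  by (rule tendsto_sum, rule isCont_tendsto_compose[OF lam_cont Y]) (use y0 in auto)

lemma omega_tendsto:
  assumes Y: "(Y \<longlongrightarrow> y0) F" and y0: "y0 \<in> P" and i: "i \<le> Suc d"
  shows "((\<lambda>z. omegaI lam d i (Y z)) \<longlongrightarrow> omegaI lam d i y0) F"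
  unfolding omegaI_def using aI_tendsto[OF Y y0 i] tail_tendsto[OF Y y0]
  by (intro tendsto_diff) (auto simp: aI_def)

lemma step_tendsto:
  assumes E: "(E \<longlongrightarrow> 0) F" and W: "(W \<longlongrightarrow> (x0, y0)) F"
    and y0: "y0 \<in> P" and i: "i \<in> {1..d}" and x0: "intr lam i y0 x0"
  shows "((\<lambda>z. Tmap lam d f (E z) (W z)) \<longlongrightarrow> Tmap lam d f 0 (x0, y0)) F"
    and "eventually (\<lambda>z. snd (W z) \<in> P \<and> intr lam i (snd (W z)) (fst (W z))) F"
proof -
  have X: "((\<lambda>z. fst (W z)) \<longlongrightarrow> x0) F" using tendsto_fst[OF W] by simp
  have Y: "((\<lambda>z. snd (W z)) \<longlongrightarrow> y0) F" using tendsto_snd[OF W] by simp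
  have e1: "eventually (\<lambda>z. snd (W z) \<in> P) F"
    using topological_tendstoD[OF Y P_open y0] .
  have l1: "((\<lambda>z. aI lam i (snd (W z)) - fst (W z)) \<longlongrightarrow> aI lam i y0 - x0) F"
    using aI_tendsto[OF Y y0] i X by (intro tendsto_diff) auto
  have e2: "eventually (\<lambda>z. aI lam i (snd (W z)) - fst (W z) < 0) F"
    using order_tendstoD(2)[OF l1, of 0] x0 by (simp add: intr_def)
  have l2: "((\<lambda>z. fst (W z) - aI lam i (snd (W z)) - lam i (snd (W z))) \<longlongrightarrow> x0 - aI lam i y0 - lam i y0) F"
    using aI_tendsto[OF Y y0] i X isCont_tendsto_compose[OF lam_cont[OF i y0] Y] by (intro tendsto_diff) auto
  have e3: "eventually (\<lambda>z. fst (W z) - aI lam i (snd (W z)) - lam i (snd (W z)) < 0) F"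
    using order_tendstoD(2)[OF l2, of 0] x0 by (simp add: intr_def)
  show ev: "eventually (\<lambda>z. snd (W z) \<in> P \<and> intr lam i (snd (W z)) (fst (W z))) F"
    using e1 e2 e3 by eventually_elim (auto simp: intr_def)
  let ?g = "\<lambda>z. (fst (W z) + omegaI lam d i (snd (W z)),
                 snd (W z) + E z * f (fst (W z) + omegaI lam d i (snd (W z))))"
  have eq: "eventually (\<lambda>z. ?g z = Tmap lam d f (E z) (W z)) F"
    using ev
  proof eventually_elim
    case (elim z)
    then have "iem lam d (snd (W z)) (fst (W z)) = fst (W z) + omegaI lam d i (snd (W z))"
      using iem_eq[OF i] intr_elemJ by blast
    then show ?case by (metis Tmap_simp prod.collapse)
  qed
  have O: "((\<lambda>z. omegaI lam d i (snd (W z))) \<longlongrightarrow> omegaI lam d i y0) F"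
    using omega_tendsto[OF Y y0] i by auto
  have "(?g \<longlongrightarrow> (x0 + omegaI lam d i y0, y0 + 0 * f (x0 + omegaI lam d i y0))) F"
    by (intro tendsto_intros X Y O E isCont_tendsto_compose[OF f_cont])
  moreover have "Tmap lam d f 0 (x0, y0) = (x0 + omegaI lam d i y0, y0 + 0 * f (x0 + omegaI lam d i y0))"
    using iem_eq[OF i y0 intr_elemJ[OF x0]] by (simp add: Tmap_simp)
  ultimately show "((\<lambda>z. Tmap lam d f (E z) (W z)) \<longlongrightarrow> Tmap lam d f 0 (x0, y0)) F"
    using Lim_transform_eventually eq by fastforce
qed

definition good :: "real \<times> real \<Rightarrow> bool" where
  "good p \<longleftrightarrow> snd p \<in> P \<and> (\<exists>i\<in>{1..d}. intr lam i (snd p) (fst p))"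

lemma iter_tendsto:
  assumes E: "(E \<longlongrightarrow> 0) F" and W: "(W \<longlongrightarrow> w0) F"
    and H: "\<And>j. j < k \<Longrightarrow> good ((Tmap lam d f 0 ^^ j) w0)"
  shows "((\<lambda>z. (Tmap lam d f (E z) ^^ k) (W z)) \<longlongrightarrow> (Tmap lam d f 0 ^^ k) w0) F"
  using H
proof (induction k)
  case 0 then show ?case using W by simp
next
  case (Suc k)
  have IH: "((\<lambda>z. (Tmap lam d f (E z) ^^ k) (W z)) \<longlongrightarrow> (Tmap lam d f 0 ^^ k) w0) F"
    using Suc by simp
  obtain x0 y0 where xy: "(Tmap lam d f 0 ^^ k) w0 = (x0, y0)" by (cases "(Tmap lam d f 0 ^^ k) w0")
  obtain i where "i \<in> {1..d}" "y0 \<in> P" "intr lam i y0 x0" using Suc.prems[of k] xy by (auto simp: good_def)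
  from step_tendsto(1)[OF E IH[unfolded xy] this(2,1,3)] show ?case using xy by simp
qed

lemma iter_eventually:
  assumes E: "(E \<longlongrightarrow> 0) F" and W: "(W \<longlongrightarrow> w0) F"
    and H: "\<And>j. j \<le> k \<Longrightarrow> good ((Tmap lam d f 0 ^^ j) w0)"
  shows "eventually (\<lambda>z. good ((Tmap lam d f (E z) ^^ k) (W z))) F"
proof -
  have L: "((\<lambda>z. (Tmap lam d f (E z) ^^ k) (W z)) \<longlongrightarrow> (Tmap lam d f 0 ^^ k) w0) F"
    using iter_tendsto[OF E W] H by auto
  obtain x0 y0 where xy: "(Tmap lam d f 0 ^^ k) w0 = (x0, y0)" by (cases "(Tmap lam d f 0 ^^ k) w0")
  obtain i where i1: "i \<in> {1..d}" and y0: "y0 \<in> P" and x0: "intr lam i y0 x0" using H[of k] xy by (auto simp: good_def)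
  from step_tendsto(2)[OF E L[unfolded xy] y0 i1 x0] show ?thesis
    by eventually_elim (use i1 in \<open>auto simp: good_def\<close>)
qed


lemma T0_iter: "(Tmap lam d f 0 ^^ k) (x, y) = ((iem lam d y ^^ k) x, y)"
  by (induction k) (auto simp: Tmap_simp)

lemma per_transl:
  assumes y0: "y0 \<in> P" and per: "per_int_props lam d y0 q J"
  shows "\<exists>\<tau>. \<forall>x\<in>J. (iem lam d y0 ^^ k) x = x + \<tau>"
proof (induction k)
  case 0 then show ?case by (rule exI[of _ 0]) simp
next
  case (Suc k)
  then obtain \<tau> where t: "\<forall>x\<in>J. (iem lam d y0 ^^ k) x = x + \<tau>" by blast
  obtain i where i: "i \<in> {1..d}" "(iem lam d y0 ^^ k) ` J \<subseteq> elemJ lam i y0"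
    using per unfolding per_int_props_def by blast
  have "\<forall>x\<in>J. (iem lam d y0 ^^ Suc k) x = x + (\<tau> + omegaI lam d i y0)"
  proof
    fix x assume x: "x \<in> J"
    then have "(iem lam d y0 ^^ k) x \<in> elemJ lam i y0" using i by auto
    then show "(iem lam d y0 ^^ Suc k) x = x + (\<tau> + omegaI lam d i y0)"
      using iem_eq[OF i(1) y0] t x by simp
  qed
  then show ?case by blast
qed

lemma orbit_good:
  assumes y0: "y0 \<in> P" and per: "per_int_props lam d y0 q {a..<b}" and ab: "a < b"
  shows "good ((iem lam d y0 ^^ k) ((a + b) / 2), y0)"
proof -
  obtain \<tau> where t: "\<forall>x\<in>{a..<b}. (iem lam d y0 ^^ k) x = x + \<tau>" using per_transl[OF y0 per] by blast
  obtain i where i: "i \<in> {1..d}" "(iem lam d y0 ^^ k) ` {a..<b} \<subseteq> elemJ lam i y0"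
    using per unfolding per_int_props_def by blast
  have aJ: "a \<in> {a..<b}" and cJ: "(a + b) / 2 \<in> {a..<b}" using ab by auto
  have "(iem lam d y0 ^^ k) a \<in> elemJ lam i y0" using i(2) aJ by blast
  then have "a + \<tau> \<in> elemJ lam i y0" using t aJ by simp
  moreover have "(iem lam d y0 ^^ k) ((a + b) / 2) \<in> elemJ lam i y0" using i(2) cJ by blast
  then have "(a + b) / 2 + \<tau> \<in> elemJ lam i y0" using t cJ by simp
  ultimately have h1: "aI lam i y0 \<le> a + \<tau>" "(a + b) / 2 + \<tau> < aI lam i y0 + lam i y0"
    unfolding elemJ_def by auto
  have "intr lam i y0 ((a + b) / 2 + \<tau>)" 
  proof -
    have m: "a < (a + b) / 2" using ab by simp
    show ?thesis unfolding intr_def using h1 m by argo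
  qed
  then show ?thesis using t cJ i y0 by (auto simp: good_def)
qed

lemma Fq_c:
  assumes y0: "y0 \<in> P" and per: "per_int_props lam d y0 q {a..<b}" and ab: "a < b"
  shows "(iem lam d y0 ^^ q) ((a + b) / 2) = (a + b) / 2"
proof -
  obtain \<tau> where t: "\<forall>x\<in>{a..<b}. (iem lam d y0 ^^ q) x = x + \<tau>" using per_transl[OF y0 per] by blast
  have im: "(iem lam d y0 ^^ q) ` {a..<b} = {a..<b}" using per by (simp add: per_int_props_def)
  have aJ: "a \<in> {a..<b}" using ab by auto
  then have "(iem lam d y0 ^^ q) a \<in> (iem lam d y0 ^^ q) ` {a..<b}" by blast
  then have "a + \<tau> \<in> (iem lam d y0 ^^ q) ` {a..<b}" using t aJ by simp
  then have "a + \<tau> \<in> {a..<b}" using im by simp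
  then have t1: "\<tau> \<ge> 0" by auto
  from aJ have "a \<in> (iem lam d y0 ^^ q) ` {a..<b}" using im by simp
  then obtain x where x: "x \<in> {a..<b}" "(iem lam d y0 ^^ q) x = a" by (metis imageE)
  then have "x + \<tau> = a" using t by simp
  then have "\<tau> \<le> 0" using x(1) by simp
  then have "\<tau> = 0" using t1 by simp
  then show ?thesis using t ab by auto
qed

lemma min_c:
  assumes y0: "y0 \<in> P" and per: "per_int_props lam d y0 q {a..<b}" and ab: "a < b"
    and k: "0 < k" "k < q"
  shows "(iem lam d y0 ^^ k) ((a + b) / 2) \<noteq> (a + b) / 2"
proof
  assume h: "(iem lam d y0 ^^ k) ((a + b) / 2) = (a + b) / 2"
  obtain \<tau> where t: "\<forall>x\<in>{a..<b}. (iem lam d y0 ^^ k) x = x + \<tau>" using per_transl[OF y0 per] by blast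
  have "(a + b) / 2 \<in> {a..<b}" using ab by auto
  then have "(a + b) / 2 + \<tau> = (a + b) / 2" using t h by simp
  then have "\<tau> = 0" by linarith
  then have "\<forall>x\<in>{a..<b}. (iem lam d y0 ^^ k) x = x" using t by simp
  then have "(iem lam d y0 ^^ k) ` {a..<b} = {a..<b}" by simp
  then show False using per k by (auto simp: per_int_props_def)
qed

lemma gam_props:
  assumes "valid_curve d cv" "s \<in> P"
  shows "0 \<le> fst (gam lam cv s) \<and> fst (gam lam cv s) < 1 \<and> snd (gam lam cv s) = s"
  using assms
proof (cases cv)
  case (CMid i)
  then have i: "i \<in> {1..d}" using assms by simp
  then show ?thesis using elemJ_sub[OF i assms(2) intr_elemJ[OF mid_intr[OF i assms(2)]]] CMid by simp
qed auto

lemma iem_iter_01: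
  assumes d1: "d \<ge> 1" and y: "y \<in> P" and x: "0 \<le> x" "x < 1"
  shows "0 \<le> (iem lam d y ^^ k) x \<and> (iem lam d y ^^ k) x < 1"
proof (induction k)
  case 0 then show ?case using x by simp
next
  case (Suc k)
  then obtain i where "i \<in> {1..d}" "(iem lam d y ^^ k) x \<in> elemJ lam i y"
    using cover[OF y, of "(iem lam d y ^^ k) x"] d1 by auto
  then show ?case using iem_01[OF _ y] by simp
qed

lemma curve_points:
  assumes d1: "d \<ge> 1" and y0: "y0 \<in> P" and per: "per_int_props lam d y0 q {a..<b}" and ab: "a < b"
    and cv: "valid_curve d cv" and yA: "yA \<in> P"
    and hit: "(Tmap lam d f 0 ^^ n) (gam lam cv yA) = (Tmap lam d f 0 ^^ m) ((a + b) / 2, y0)"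
  shows "yA = y0" and "\<And>i. i \<le> n \<Longrightarrow> good ((Tmap lam d f 0 ^^ i) (gam lam cv yA))"
proof -
  let ?F = "iem lam d y0" and ?c = "(a + b) / 2"
  obtain x0 where g: "gam lam cv yA = (x0, yA)" and x0: "0 \<le> x0" "x0 < 1"
    using gam_props[OF cv yA] by (cases "gam lam cv yA") auto
  show yy: "yA = y0" using hit g by (simp add: T0_iter)
  have q0: "0 < q" using per by (simp add: per_int_props_def)
  have main: "\<exists>j. (?F ^^ (n - i)) x0 = (?F ^^ j) ?c" if "i \<le> n" for i
    using that
  proof (induction i)
    case 0 then show ?case using hit g yy by (auto simp: T0_iter)
  next
    case (Suc i)
    then obtain j where j: "(?F ^^ (n - i)) x0 = (?F ^^ j) ?c" by auto
    obtain j' where j': "?F ((?F ^^ j') ?c) = (?F ^^ j) ?c"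
    proof (cases j)
      case 0
      have sq: "Suc (q - 1) = q" using q0 by simp
      have "?F ((?F ^^ (q - 1)) ?c) = (?F ^^ Suc (q - 1)) ?c" by simp
      then have "?F ((?F ^^ (q - 1)) ?c) = (?F ^^ q) ?c" by (simp only: sq)
      then show ?thesis using that Fq_c[OF y0 per ab] 0 by simp
    next
      case (Suc j0)
      then show ?thesis using that[of j0] by simp
    qed
    have nn: "n - i = Suc (n - Suc i)" using Suc.prems by simp
    have "?F ((?F ^^ (n - Suc i)) x0) = (?F ^^ (n - i)) x0" by (simp only: nn funpow.simps o_apply)
    then have "?F ((?F ^^ (n - Suc i)) x0) = ?F ((?F ^^ j') ?c)" using j j' by simp
    moreover obtain i1 where i1: "i1 \<in> {1..d}" "(?F ^^ (n - Suc i)) x0 \<in> elemJ lam i1 y0"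
      using cover[OF y0, of "(?F ^^ (n - Suc i)) x0"] iem_iter_01[OF d1 y0 x0, of "n - Suc i"] d1 by auto
    moreover obtain i2 where i2: "i2 \<in> {1..d}" "(?F ^^ j') ?c \<in> elemJ lam i2 y0"
      using orbit_good[OF y0 per ab, of j'] intr_elemJ by (auto simp: good_def)
    ultimately have "(?F ^^ (n - Suc i)) x0 = (?F ^^ j') ?c" using iem_inj[OF y0 i1 i2] by simp
    then show ?case by blast
  qed
  fix i assume i: "i \<le> n"
  obtain j where "(?F ^^ (n - (n - i))) x0 = (?F ^^ j) ?c" using main[of "n - i"] by auto
  then have "(Tmap lam d f 0 ^^ i) (gam lam cv yA) = ((?F ^^ j) ?c, y0)" using i g yy by (simp add: T0_iter)
  then show "good ((Tmap lam d f 0 ^^ i) (gam lam cv yA))" using orbit_good[OF y0 per ab] by simp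
qed

end

definition C1on :: "'a::euclidean_space set \<Rightarrow> ('a \<Rightarrow> 'b::real_normed_vector) \<Rightarrow> bool" where
  "C1on U g \<longleftrightarrow> (\<exists>g'. (\<forall>x\<in>U. (g has_derivative blinfun_apply (g' x)) (at x)) \<and> continuous_on U g')"

lemma C1_cont: "C1on U g \<Longrightarrow> continuous_on U g"
  unfolding C1on_def
  by (meson continuous_at_imp_continuous_on has_derivative_continuous)

lemma C1_linear: "bounded_linear L \<Longrightarrow> C1on U L"
  unfolding C1on_def
  by (rule exI[of _ "\<lambda>_. Blinfun L"])
     (auto simp: bounded_linear_Blinfun_apply bounded_linear_imp_has_derivative)

lemma C1_const: "C1on U (\<lambda>x. c)"
  unfolding C1on_def by (rule exI[of _ "\<lambda>_. 0"]) (auto simp: zero_blinfun.rep_eq)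

lemma C1_add: "C1on U g1 \<Longrightarrow> C1on U g2 \<Longrightarrow> C1on U (\<lambda>x. g1 x + g2 x)"
  unfolding C1on_def
proof (elim exE conjE)
  fix g1' g2' assume d1: "\<forall>x\<in>U. (g1 has_derivative blinfun_apply (g1' x)) (at x)"
    and c1: "continuous_on U g1'" and d2: "\<forall>x\<in>U. (g2 has_derivative blinfun_apply (g2' x)) (at x)"
    and c2: "continuous_on U g2'"
  show "\<exists>g'. (\<forall>x\<in>U. ((\<lambda>x. g1 x + g2 x) has_derivative blinfun_apply (g' x)) (at x)) \<and> continuous_on U g'"
    by (rule exI[of _ "\<lambda>x. g1' x + g2' x"])
       (use d1 d2 c1 c2 in \<open>auto intro!: has_derivative_add continuous_on_add simp: plus_blinfun.rep_eq\<close>)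
qed

lemma C1_neg: "C1on U g \<Longrightarrow> C1on U (\<lambda>x. - g x)"
  unfolding C1on_def
proof (elim exE conjE)
  fix g' assume d1: "\<forall>x\<in>U. (g has_derivative blinfun_apply (g' x)) (at x)"
    and c1: "continuous_on U g'"
  show "\<exists>g'. (\<forall>x\<in>U. ((\<lambda>x. - g x) has_derivative blinfun_apply (g' x)) (at x)) \<and> continuous_on U g'"
    by (rule exI[of _ "\<lambda>x. - g' x"])
       (use d1 c1 in \<open>auto intro!: has_derivative_minus continuous_on_minus simp: uminus_blinfun.rep_eq\<close>)
qed

lemma C1_diff: "C1on U g1 \<Longrightarrow> C1on U g2 \<Longrightarrow> C1on U (\<lambda>x. g1 x - g2 x)"
  using C1_add[of U g1 "\<lambda>x. - g2 x"] C1_neg[of U g2] by simp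

lemma C1_mult:
  fixes g1 g2 :: "'a::euclidean_space \<Rightarrow> real"
  shows "C1on U g1 \<Longrightarrow> C1on U g2 \<Longrightarrow> C1on U (\<lambda>x. g1 x * g2 x)"
proof -
  assume a1: "C1on U g1" and a2: "C1on U g2"
  have cg1: "continuous_on U g1" and cg2: "continuous_on U g2" using C1_cont a1 a2 by auto
  from a1 a2 obtain g1' g2' where d1: "\<forall>x\<in>U. (g1 has_derivative blinfun_apply (g1' x)) (at x)"
    and c1: "continuous_on U g1'" and d2: "\<forall>x\<in>U. (g2 has_derivative blinfun_apply (g2' x)) (at x)"
    and c2: "continuous_on U g2'" unfolding C1on_def by blast
  show ?thesis unfolding C1on_def
  proof (rule exI[of _ "\<lambda>x. g1 x *\<^sub>R g2' x + g2 x *\<^sub>R g1' x"], intro conjI ballI)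
    fix x assume x: "x \<in> U"
    have "((\<lambda>x. g1 x * g2 x) has_derivative (\<lambda>h. g1 x * g2' x h + g1' x h * g2 x)) (at x)"
      using d1 d2 x by (intro has_derivative_mult) auto
    moreover have "(\<lambda>h. g1 x * g2' x h + g1' x h * g2 x) = blinfun_apply (g1 x *\<^sub>R g2' x + g2 x *\<^sub>R g1' x)"
      by (auto simp: plus_blinfun.rep_eq scaleR_blinfun.rep_eq mult.commute)
    ultimately show "((\<lambda>x. g1 x * g2 x) has_derivative blinfun_apply (g1 x *\<^sub>R g2' x + g2 x *\<^sub>R g1' x)) (at x)"
      by simp
  next
    show "continuous_on U (\<lambda>x. g1 x *\<^sub>R g2' x + g2 x *\<^sub>R g1' x)"
      using cg1 cg2 c1 c2 by (intro continuous_intros)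
  qed
qed

lemma C1_sum:
  fixes g :: "nat \<Rightarrow> 'a::euclidean_space \<Rightarrow> real"
  assumes "finite A" "\<And>j. j \<in> A \<Longrightarrow> C1on U (g j)"
  shows "C1on U (\<lambda>x. \<Sum>j\<in>A. g j x)"
  using assms
proof (induction A rule: finite_induct)
  case empty then show ?case using C1_const[of U "0::real"] by simp
next
  case (insert a A)
  then show ?case using C1_add[of U "g a" "\<lambda>x. \<Sum>j\<in>A. g j x"] by simp
qed

lemma C1_compose:
  fixes g :: "'a::euclidean_space \<Rightarrow> real" and h :: "real \<Rightarrow> real"
  assumes g: "C1on U g" and gW: "g ` U \<subseteq> W"
    and hd: "\<And>y. y \<in> W \<Longrightarrow> (h has_real_derivative h' y) (at y)"
    and hc: "continuous_on W h'"
  shows "C1on U (\<lambda>x. h (g x))"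
proof -
  have cg: "continuous_on U g" using C1_cont g by auto
  from g obtain g' where d1: "\<forall>x\<in>U. (g has_derivative blinfun_apply (g' x)) (at x)"
    and c1: "continuous_on U g'" unfolding C1on_def by blast
  show ?thesis unfolding C1on_def
  proof (rule exI[of _ "\<lambda>x. h' (g x) *\<^sub>R g' x"], intro conjI ballI)
    fix x assume x: "x \<in> U"
    have hx: "(h has_derivative (\<lambda>t. h' (g x) * t)) (at (g x))"
      using hd[of "g x"] gW x by (auto simp: has_field_derivative_def)
    have "((\<lambda>x. h (g x)) has_derivative (\<lambda>v. h' (g x) * g' x v)) (at x)"
      using has_derivative_compose[where f=g and f'="g' x" and x=x and s=UNIV, OF _ hx] d1 x by simp
    moreover have "(\<lambda>v. h' (g x) * g' x v) = blinfun_apply (h' (g x) *\<^sub>R g' x)"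
      by (auto simp: scaleR_blinfun.rep_eq)
    ultimately show "((\<lambda>x. h (g x)) has_derivative blinfun_apply (h' (g x) *\<^sub>R g' x)) (at x)" by simp
  next
    have "continuous_on U (\<lambda>x. h' (g x))"
      using continuous_on_compose2[OF hc cg gW] .
    then show "continuous_on U (\<lambda>x. h' (g x) *\<^sub>R g' x)" using c1 by (intro continuous_intros)
  qed
qed

definition pairL :: "('a::real_normed_vector \<Rightarrow>\<^sub>L 'b::real_normed_vector) \<Rightarrow> ('a \<Rightarrow>\<^sub>L 'c::real_normed_vector) \<Rightarrow> 'a \<Rightarrow>\<^sub>L ('b \<times> 'c)" where
  "pairL B1 B2 = Blinfun (\<lambda>h. (B1 h, B2 h))"

lemma pairL_apply: "blinfun_apply (pairL B1 B2) h = (B1 h, B2 h)"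
proof -
  have "bounded_linear (\<lambda>h. (blinfun_apply B1 h, blinfun_apply B2 h))"
    by (intro bounded_linear_Pair blinfun.bounded_linear_right)
  then show ?thesis by (simp add: pairL_def bounded_linear_Blinfun_apply)
qed

lemma C1_pair:
  fixes g1 :: "'a::euclidean_space \<Rightarrow> 'b::real_normed_vector" and g2 :: "'a \<Rightarrow> 'c::real_normed_vector"
  assumes a1: "C1on U g1" and a2: "C1on U g2"
  shows "C1on U (\<lambda>x. (g1 x, g2 x))"
proof -
  from a1 a2 obtain g1' g2' where d1: "\<forall>x\<in>U. (g1 has_derivative blinfun_apply (g1' x)) (at x)"
    and c1: "continuous_on U g1'" and d2: "\<forall>x\<in>U. (g2 has_derivative blinfun_apply (g2' x)) (at x)"
    and c2: "continuous_on U g2'" unfolding C1on_def by blast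
  show ?thesis unfolding C1on_def
  proof (rule exI[of _ "\<lambda>x. pairL (g1' x) (g2' x)"], intro conjI ballI)
    fix x assume x: "x \<in> U"
    have "((\<lambda>x. (g1 x, g2 x)) has_derivative (\<lambda>h. (g1' x h, g2' x h))) (at x)"
      using d1 d2 x by (intro has_derivative_Pair) auto
    moreover have "(\<lambda>h. (g1' x h, g2' x h)) = blinfun_apply (pairL (g1' x) (g2' x))"
      by (auto simp: pairL_apply)
    ultimately show "((\<lambda>x. (g1 x, g2 x)) has_derivative blinfun_apply (pairL (g1' x) (g2' x))) (at x)"
      by simp
  next
    show "continuous_on U (\<lambda>x. pairL (g1' x) (g2' x))"
    proof (rule continuous_on_blinfun_componentwise)
      fix i :: 'a
      show "continuous_on U (\<lambda>x. blinfun_apply (pairL (g1' x) (g2' x)) i)"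
        unfolding pairL_apply using c1 c2 by (intro continuous_intros)
    qed
  qed
qed


primrec orbXY :: "(nat \<Rightarrow> real \<Rightarrow> real) \<Rightarrow> nat \<Rightarrow> (real \<Rightarrow> real) \<Rightarrow> (nat \<Rightarrow> nat) \<Rightarrow> curve
    \<Rightarrow> real \<Rightarrow> real \<Rightarrow> nat \<Rightarrow> real \<times> real" where
  "orbXY lam d f ix cv s e 0 = gam lam cv s"
| "orbXY lam d f ix cv s e (Suc k) =
     (fst (orbXY lam d f ix cv s e k) + omegaI lam d (ix k) (snd (orbXY lam d f ix cv s e k)),
      snd (orbXY lam d f ix cv s e k) + e * f (fst (orbXY lam d f ix cv s e k) + omegaI lam d (ix k) (snd (orbXY lam d f ix cv s e k))))"

context iemctx begin

lemma gam_tendsto: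
  assumes Y: "(Y \<longlongrightarrow> y) F" and y: "y \<in> P" and cv: "valid_curve d cv"
  shows "((\<lambda>z. gam lam cv (Y z)) \<longlongrightarrow> gam lam cv y) F"
proof (cases cv)
  case (CMid i)
  then have i: "i \<in> {1..d}" using cv by simp
  have "((\<lambda>z. midI lam i (Y z)) \<longlongrightarrow> midI lam i y) F"
    unfolding midI_def using aI_tendsto[OF Y y, of i] i isCont_tendsto_compose[OF lam_cont[OF i y] Y]
    by (intro tendsto_intros) auto
  then show ?thesis using CMid Y by (simp add: tendsto_Pair)
qed (use Y in \<open>auto intro: tendsto_Pair\<close>)

lemma iter_eventually_idx:
  assumes E: "(E \<longlongrightarrow> 0) F" and W: "(W \<longlongrightarrow> w0) F"
    and H: "\<And>j. j < k \<Longrightarrow> good ((Tmap lam d f 0 ^^ j) w0)"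
    and i: "i \<in> {1..d}" and Pk: "snd ((Tmap lam d f 0 ^^ k) w0) \<in> P"
    and Ik: "intr lam i (snd ((Tmap lam d f 0 ^^ k) w0)) (fst ((Tmap lam d f 0 ^^ k) w0))"
  shows "eventually (\<lambda>z. snd ((Tmap lam d f (E z) ^^ k) (W z)) \<in> P \<and>
            intr lam i (snd ((Tmap lam d f (E z) ^^ k) (W z))) (fst ((Tmap lam d f (E z) ^^ k) (W z)))) F"
proof -
  have L: "((\<lambda>z. (Tmap lam d f (E z) ^^ k) (W z)) \<longlongrightarrow> (Tmap lam d f 0 ^^ k) w0) F"
    using iter_tendsto[OF E W] H by auto
  obtain x0 y0 where xy: "(Tmap lam d f 0 ^^ k) w0 = (x0, y0)" by (cases "(Tmap lam d f 0 ^^ k) w0")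
  show ?thesis using step_tendsto(2)[OF E L[unfolded xy], of i] Pk Ik i xy by simp
qed

lemma TST_good: "good v \<Longrightarrow> Tmap lam d f e (Smap f e (Tmap lam d f e v)) = Smap f e v"
  unfolding good_def using TST by (metis prod.collapse)

lemma good_01: "good v \<Longrightarrow> 0 \<le> fst v \<and> fst v < 1"
  unfolding good_def using elemJ_sub intr_elemJ by blast

lemma curve_rel:
  assumes cv: "valid_curve d cv" and s: "s \<in> P"
    and p: "p = (Tmap lam d f e ^^ n) (gam lam cv s)"
    and gd: "\<And>i. i < n \<Longrightarrow> good ((Tmap lam d f e ^^ i) (gam lam cv s))"
    and gp: "good p"
  shows "(jval cv n \<ge> 0 \<and> p = (Tmap lam d f e ^^ nat (jval cv n)) (Smap f e p))
         \<or> (jval cv n = -1 \<and> Smap f e p = Tmap lam d f e p)"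
proof -
  let ?T = "Tmap lam d f e" and ?S = "Smap f e" and ?g = "gam lam cv s"
  have type0: "(?T ^^ (2 * n)) (?S p) = p" if fix0: "?S ?g = ?g"
  proof -
    have "?S ?g = (?T ^^ n) (?S ((?T ^^ n) ?g))"
      by (rule chain) (use gd TST_good in auto)
    then have "?g = (?T ^^ n) (?S p)" using fix0 p by simp
    then have "p = (?T ^^ n) ((?T ^^ n) (?S p))" using p by simp
    then show ?thesis by (simp add: mult_2 funpow_add)
  qed
  show ?thesis
  proof (cases cv)
    case C0
    have "nat (jval cv n) = 2 * n" using C0 by (simp add: nat_mult_distrib)
    then show ?thesis using type0 S_fix0 C0 by simp
  next
    case CHalf
    have "nat (jval cv n) = 2 * n" using CHalf by (simp add: nat_mult_distrib)
    then show ?thesis using type0 S_fixhalf CHalf by simp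
  next
    case (CMid i)
    then have i: "i \<in> {1..d}" using cv by simp
    have st: "?S (?T ?g) = ?g" using ST_mid[OF i s] CMid by simp
    show ?thesis
    proof (cases n)
      case 0
      then have "p = ?g" using p by simp
      have "?T (?S (?T p)) = ?S p" using TST_good[OF gp] .
      then have "?S p = ?T p" using st \<open>p = ?g\<close> by simp
      then show ?thesis using CMid 0 by simp
    next
      case (Suc n0)
      have "?S (?T ?g) = (?T ^^ n0) (?S ((?T ^^ n0) (?T ?g)))"
      proof (rule chain)
        fix j assume "j < n0"
        then have "Suc j < n" using Suc by simp
        then have "good ((?T ^^ Suc j) ?g)" using gd by blast
        moreover have "(?T ^^ j) (?T ?g) = (?T ^^ Suc j) ?g" by (simp only: funpow_Suc_right o_apply)
        ultimately have "good ((?T ^^ j) (?T ?g))" by simp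
        then show "?T (?S (?T ((?T ^^ j) (?T ?g)))) = ?S ((?T ^^ j) (?T ?g))"
          by (rule TST_good)
      qed
      moreover have "(?T ^^ n0) (?T ?g) = p" using p Suc by (simp add: funpow_swap1)
      ultimately have "?g = (?T ^^ n0) (?S p)" using st by simp
      then have "p = (?T ^^ n) ((?T ^^ n0) (?S p))" using p by simp
      then have "p = (?T ^^ (n + n0)) (?S p)" by (simp add: funpow_add)
      moreover have "nat (jval cv n) = n + n0" using CMid Suc by simp
      ultimately show ?thesis using CMid Suc by simp
    qed
  qed
qed

lemma orb_eq:
  assumes "\<And>j. j < k \<Longrightarrow> ix j \<in> {1..d} \<and> snd ((Tmap lam d f e ^^ j) (gam lam cv s)) \<in> P \<and>
              intr lam (ix j) (snd ((Tmap lam d f e ^^ j) (gam lam cv s))) (fst ((Tmap lam d f e ^^ j) (gam lam cv s)))"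
  shows "(Tmap lam d f e ^^ k) (gam lam cv s) = orbXY lam d f ix cv s e k"
  using assms
proof (induction k)
  case 0 then show ?case by simp
next
  case (Suc k)
  then have IH: "(Tmap lam d f e ^^ k) (gam lam cv s) = orbXY lam d f ix cv s e k" by simp
  have h: "ix k \<in> {1..d}" "snd (orbXY lam d f ix cv s e k) \<in> P"
    "intr lam (ix k) (snd (orbXY lam d f ix cv s e k)) (fst (orbXY lam d f ix cv s e k))"
    using Suc.prems[of k] IH by auto
  have ie: "iem lam d (snd (orbXY lam d f ix cv s e k)) (fst (orbXY lam d f ix cv s e k))
        = fst (orbXY lam d f ix cv s e k) + omegaI lam d (ix k) (snd (orbXY lam d f ix cv s e k))"
    using iem_eq[OF h(1,2) intr_elemJ[OF h(3)]] .
  have "(Tmap lam d f e ^^ Suc k) (gam lam cv s) = Tmap lam d f e (orbXY lam d f ix cv s e k)"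
    using IH by simp
  also have "\<dots> = orbXY lam d f ix cv s e (Suc k)"
    using ie by (cases "orbXY lam d f ix cv s e k") (simp add: Tmap_simp)
  finally show ?case .
qed

lemma lam_C1data:
  assumes i: "i \<in> {1..d}"
  shows "\<And>y. y \<in> P \<Longrightarrow> (lam i has_real_derivative deriv (lam i) y) (at y)"
    and "continuous_on P (deriv (lam i))"
proof -
  fix y assume "y \<in> P"
  then have "(lam i) field_differentiable (at y)" using lam_smooth[OF i] unfolding smooth_on_def
    by (metis funpow_0)
  then show "(lam i has_real_derivative deriv (lam i) y) (at y)"
    using DERIV_deriv_iff_field_differentiable by blast
next
  have "\<forall>y\<in>P. ((deriv ^^ Suc 0) (lam i)) field_differentiable (at y)" using lam_smooth[OF i] unfolding smooth_on_def
    by blast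
  then have "\<forall>y\<in>P. (deriv (lam i)) field_differentiable (at y)" by simp
  then show "continuous_on P (deriv (lam i))"
    by (meson continuous_at_imp_continuous_on field_differentiable_imp_continuous_at)
qed

lemma f_C1data:
  shows "\<And>y. (f has_real_derivative deriv f y) (at y)"
    and "continuous_on UNIV (deriv f)"
proof -
  fix y
  have "f field_differentiable (at y)" using f_smooth unfolding smooth_on_def
    by (metis funpow_0 UNIV_I)
  then show "(f has_real_derivative deriv f y) (at y)"
    using DERIV_deriv_iff_field_differentiable by blast
next
  have "\<forall>y. ((deriv ^^ Suc 0) f) field_differentiable (at y)" using f_smooth unfolding smooth_on_def
    by blast
  then have "\<forall>y. (deriv f) field_differentiable (at y)" by simp
  then show "continuous_on UNIV (deriv f)"
    by (meson continuous_at_imp_continuous_on field_differentiable_imp_continuous_at)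
qed

lemma C1_lam:
  fixes Y :: "'a::euclidean_space \<Rightarrow> real"
  assumes "C1on U Y" "Y ` U \<subseteq> P" "j \<in> {1..d}"
  shows "C1on U (\<lambda>z. lam j (Y z))"
  using C1_compose[OF assms(1,2) lam_C1data(1)[OF assms(3)] lam_C1data(2)[OF assms(3)]] .

lemma C1_aI:
  fixes Y :: "'a::euclidean_space \<Rightarrow> real"
  assumes "C1on U Y" "Y ` U \<subseteq> P" "i \<le> Suc d"
  shows "C1on U (\<lambda>z. aI lam i (Y z))"
  unfolding aI_def using assms by (intro C1_sum C1_lam) auto

lemma C1_omega:
  fixes Y :: "'a::euclidean_space \<Rightarrow> real"
  assumes "C1on U Y" "Y ` U \<subseteq> P" "i \<le> Suc d"
  shows "C1on U (\<lambda>z. omegaI lam d i (Y z))"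
  unfolding omegaI_def using assms by (intro C1_diff C1_sum C1_lam) auto

lemma C1_f:
  fixes X :: "'a::euclidean_space \<Rightarrow> real"
  assumes "C1on U X"
  shows "C1on U (\<lambda>z. f (X z))"
  using C1_compose[OF assms subset_UNIV f_C1data(1) f_C1data(2)] .

lemma C1_gam:
  fixes S :: "'a::euclidean_space \<Rightarrow> real"
  assumes S: "C1on U S" "S ` U \<subseteq> P" and cv: "valid_curve d cv"
  shows "C1on U (\<lambda>z. fst (gam lam cv (S z)))" "C1on U (\<lambda>z. snd (gam lam cv (S z)))"
proof -
  show "C1on U (\<lambda>z. snd (gam lam cv (S z)))" using S by (cases cv) auto
  show "C1on U (\<lambda>z. fst (gam lam cv (S z)))"
  proof (cases cv)
    case (CMid i)
    then have i: "i \<in> {1..d}" using cv by simp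
    have "C1on U (\<lambda>z. aI lam i (S z) + lam i (S z) * (1/2))"
      using i S by (intro C1_add C1_aI C1_mult C1_lam C1_const) auto
    then show ?thesis using CMid by (simp add: midI_def)
  qed (auto intro: C1_const)
qed

lemma C1_orb:
  fixes S E :: "'a::euclidean_space \<Rightarrow> real"
  assumes S: "C1on U S" "S ` U \<subseteq> P" and E: "C1on U E" and cv: "valid_curve d cv"
    and ix: "\<And>j. j < k \<Longrightarrow> ix j \<in> {1..d}"
    and inP: "\<And>z j. z \<in> U \<Longrightarrow> j < k \<Longrightarrow> snd (orbXY lam d f ix cv (S z) (E z) j) \<in> P"
  shows "C1on U (\<lambda>z. fst (orbXY lam d f ix cv (S z) (E z) k)) \<and> C1on U (\<lambda>z. snd (orbXY lam d f ix cv (S z) (E z) k))"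
  using ix inP
proof (induction k)
  case 0 then show ?case using C1_gam[OF S cv] by simp
next
  case (Suc k)
  let ?X = "\<lambda>z. fst (orbXY lam d f ix cv (S z) (E z) k)" and ?Y = "\<lambda>z. snd (orbXY lam d f ix cv (S z) (E z) k)"
  have IH: "C1on U ?X" "C1on U ?Y" using Suc by auto
  have YP: "?Y ` U \<subseteq> P" using Suc.prems(2)[of _ k] by auto
  have ik: "ix k \<le> Suc d" using Suc.prems(1)[of k] by auto
  have X': "C1on U (\<lambda>z. ?X z + omegaI lam d (ix k) (?Y z))"
    using IH YP ik by (intro C1_add C1_omega) auto
  have Y': "C1on U (\<lambda>z. ?Y z + E z * f (?X z + omegaI lam d (ix k) (?Y z)))"
    using C1_add[OF IH(2) C1_mult[OF E C1_f[OF X']]] .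
  show ?case using X' Y' by simp
qed

end

lemma box_ball:
  fixes s t e yA yB :: real
  assumes "\<bar>s - yA\<bar> < eta" "\<bar>t - yB\<bar> < eta" "\<bar>e\<bar> < eta"
  shows "dist (s, t, e) (yA, yB, 0::real) < 3 * eta"
proof -
  have "dist (s, t, e) (yA, yB, 0::real) = norm (s - yA, t - yB, e)" by (simp add: dist_norm)
  also have "\<dots> \<le> norm (s - yA) + norm (t - yB, e)" by (rule norm_Pair_le)
  also have "norm (t - yB, e) \<le> norm (t - yB) + norm e" by (rule norm_Pair_le)
  finally show ?thesis using assms by simp
qed

lemma deriv_dirA:
  fixes G :: "real \<times> real \<times> real \<Rightarrow> real \<times> real \<times> real" and \<Phi> :: "real \<Rightarrow> real \<times> real" and U :: "(real \<times> real \<times> real) set"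
  assumes dG: "(G has_derivative L) (at (yA, yB, 0))" and U: "open U" "(yA, yB, 0) \<in> U"
    and eq: "\<And>s. (s, yB, 0) \<in> U \<Longrightarrow> G (s, yB, 0) = (fst (\<Phi> s) - c1, snd (\<Phi> s) - c2, 0)"
    and d\<Phi>: "(\<Phi> has_vector_derivative v) (at yA)"
  shows "L (h, 0, 0) = (h * fst v, h * snd v, 0)"
proof -
  let ?\<phi> = "\<lambda>s::real. (s, yB, 0::real)"
  have d\<phi>: "(?\<phi> has_derivative (\<lambda>h. (h, 0, 0))) (at yA)"
    by (intro has_derivative_Pair has_derivative_ident has_derivative_const)
  have dGp: "((\<lambda>s. G (?\<phi> s)) has_derivative (\<lambda>h. L (h, 0, 0))) (at yA)"
    using has_derivative_compose[OF d\<phi>, of G L] dG by simp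
  have O: "open (?\<phi> -` U)" by (rule continuous_open_vimage[OF U(1)]) (intro continuous_intros)
  have yO: "yA \<in> ?\<phi> -` U" using U by simp
  have dP: "(\<Phi> has_derivative (\<lambda>h. h *\<^sub>R v)) (at yA)" using d\<Phi> by (simp add: has_vector_derivative_def)
  have dR: "((\<lambda>s. (fst (\<Phi> s) - c1, snd (\<Phi> s) - c2, 0::real)) has_derivative
             (\<lambda>h. (fst (h *\<^sub>R v) - 0, snd (h *\<^sub>R v) - 0, 0))) (at yA)"
    by (intro has_derivative_Pair has_derivative_diff has_derivative_fst has_derivative_snd dP has_derivative_const)
  have dR': "((\<lambda>s. G (?\<phi> s)) has_derivative (\<lambda>h. (fst (h *\<^sub>R v) - 0, snd (h *\<^sub>R v) - 0, 0))) (at yA)"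
    by (rule has_derivative_transform_within_open[OF dR O yO]) (simp add: eq)
  have "(\<lambda>h. L (h, 0, 0)) = (\<lambda>h. (fst (h *\<^sub>R v) - 0, snd (h *\<^sub>R v) - 0, 0::real))"
    using has_derivative_unique[OF dGp dR'] .
  then show ?thesis by (simp add: fun_eq_iff)
qed

lemma deriv_dirB:
  fixes G :: "real \<times> real \<times> real \<Rightarrow> real \<times> real \<times> real" and \<Phi> :: "real \<Rightarrow> real \<times> real" and U :: "(real \<times> real \<times> real) set"
  assumes dG: "(G has_derivative L) (at (yA, yB, 0))" and U: "open U" "(yA, yB, 0) \<in> U"
    and eq: "\<And>t. (yA, t, 0) \<in> U \<Longrightarrow> G (yA, t, 0) = (c1 - fst (\<Phi> t), c2 - snd (\<Phi> t), 0)"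
    and d\<Phi>: "(\<Phi> has_vector_derivative v) (at yB)"
  shows "L (0, h, 0) = (- (h * fst v), - (h * snd v), 0)"
proof -
  let ?\<phi> = "\<lambda>t::real. (yA, t, 0::real)"
  have d\<phi>: "(?\<phi> has_derivative (\<lambda>h. (0, h, 0))) (at yB)"
    by (intro has_derivative_Pair has_derivative_ident has_derivative_const)
  have dGp: "((\<lambda>s. G (?\<phi> s)) has_derivative (\<lambda>h. L (0, h, 0))) (at yB)"
    using has_derivative_compose[OF d\<phi>, of G L] dG by simp
  have O: "open (?\<phi> -` U)" by (rule continuous_open_vimage[OF U(1)]) (intro continuous_intros)
  have yO: "yB \<in> ?\<phi> -` U" using U by simp
  have dP: "(\<Phi> has_derivative (\<lambda>h. h *\<^sub>R v)) (at yB)" using d\<Phi> by (simp add: has_vector_derivative_def)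
  have dR: "((\<lambda>s. (c1 - fst (\<Phi> s), c2 - snd (\<Phi> s), 0::real)) has_derivative
             (\<lambda>h. (0 - fst (h *\<^sub>R v), 0 - snd (h *\<^sub>R v), 0))) (at yB)"
    by (intro has_derivative_Pair has_derivative_diff has_derivative_fst has_derivative_snd dP has_derivative_const)
  have dR': "((\<lambda>s. G (?\<phi> s)) has_derivative (\<lambda>h. (0 - fst (h *\<^sub>R v), 0 - snd (h *\<^sub>R v), 0))) (at yB)"
    by (rule has_derivative_transform_within_open[OF dR O yO]) (simp add: eq)
  have "(\<lambda>h. L (0, h, 0)) = (\<lambda>h. (0 - fst (h *\<^sub>R v), 0 - snd (h *\<^sub>R v), 0::real))"
    using has_derivative_unique[OF dGp dR'] .
  then show ?thesis by (simp add: fun_eq_iff)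
qed

lemma invertible_L:
  fixes L :: "(real \<times> real \<times> real) \<Rightarrow>\<^sub>L (real \<times> real \<times> real)"
  assumes LA: "\<And>h. L (h, 0, 0) = (h * a1, h * a2, 0)"
    and LB: "\<And>h. L (0, h, 0) = (- (h * b1), - (h * b2), 0)"
    and LE: "\<And>w. snd (snd (L w)) = snd (snd w)"
    and ind: "a1 * b2 - a2 * b1 \<noteq> 0"
  obtains invf where "invf o\<^sub>L L = id_blinfun"
proof -
  have inj: "inj (blinfun_apply L)"
  proof (rule injI)
    fix w w' assume "L w = L w'"
    then have z: "L (w - w') = 0" by (simp add: blinfun.diff_right)
    obtain h1 h2 h3 where w: "w - w' = (h1, h2, h3)" by (cases "w - w'") auto
    have h3: "h3 = 0" using LE[of "w - w'"] z w by simp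
    have "L (w - w') = L ((h1, 0, 0) + (0, h2, 0))" using w h3 by simp
    also have "\<dots> = L (h1, 0, 0) + L (0, h2, 0)" by (rule blinfun.add_right)
    finally have "L (w - w') = L (h1, 0, 0) + L (0, h2, 0)" .
    then have e1: "h1 * a1 - h2 * b1 = 0" and e2: "h1 * a2 - h2 * b2 = 0" using z LA LB by (auto simp: zero_prod_def)
    have "h1 * (a1 * b2 - a2 * b1) = b2 * (h1 * a1 - h2 * b1) - b1 * (h1 * a2 - h2 * b2)" by (simp add: algebra_simps)
    then have "h1 = 0" using e1 e2 ind by simp
    have "h2 * (a1 * b2 - a2 * b1) = a2 * (h1 * a1 - h2 * b1) - a1 * (h1 * a2 - h2 * b2)" by (simp add: algebra_simps)
    then have "h2 = 0" using e1 e2 ind by simp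
    have "w - w' = 0" using w h3 \<open>h1 = 0\<close> \<open>h2 = 0\<close> by (simp add: zero_prod_def)
    then show "w = w'" by simp
  qed
  have lin: "linear (blinfun_apply L)" by (rule bounded_linear.linear[OF blinfun.bounded_linear_right])
  obtain gi where gi: "linear gi" "gi \<circ> blinfun_apply L = id"
    using linear_injective_left_inverse[OF lin inj] by blast
  have bl: "bounded_linear gi" using gi(1) linear_conv_bounded_linear by blast
  show ?thesis
  proof (rule that[of "Blinfun gi"], rule blinfun_eqI)
    fix i show "blinfun_apply (Blinfun gi o\<^sub>L L) i = blinfun_apply id_blinfun i"
    proof -
      have "gi (L i) = i" using gi(2) by (metis comp_apply id_apply)
      then show ?thesis using bl by (simp add: bounded_linear_Blinfun_apply)
    qed
  qed
qed

context iemctx begin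

lemma curve_setup:
  assumes cv: "valid_curve d cv" and yA: "yA \<in> P"
    and gd: "\<And>i. i \<le> n \<Longrightarrow> good ((Tmap lam d f 0 ^^ i) (gam lam cv yA))"
    and SA: "(SA \<longlongrightarrow> yA) F" and E: "(E \<longlongrightarrow> 0) F"
  obtains ix where "\<And>j. j < n \<Longrightarrow> ix j \<in> {1..d}"
    and "eventually (\<lambda>z. SA z \<in> P \<and> (\<forall>j\<in>{..<n}. snd ((Tmap lam d f (E z) ^^ j) (gam lam cv (SA z))) \<in> P \<and>
            intr lam (ix j) (snd ((Tmap lam d f (E z) ^^ j) (gam lam cv (SA z)))) (fst ((Tmap lam d f (E z) ^^ j) (gam lam cv (SA z)))))) F"
proof -
  let ?w = "\<lambda>j. (Tmap lam d f 0 ^^ j) (gam lam cv yA)"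
  define ix where "ix j = (SOME i. i \<in> {1..d} \<and> intr lam i (snd (?w j)) (fst (?w j)))" for j
  have ixp: "ix j \<in> {1..d} \<and> intr lam (ix j) (snd (?w j)) (fst (?w j))" if "j \<le> n" for j
  proof -
    have "\<exists>i. i \<in> {1..d} \<and> intr lam i (snd (?w j)) (fst (?w j))" using gd[OF that] by (auto simp: good_def)
    then show ?thesis unfolding ix_def by (rule someI_ex)
  qed
  have W: "((\<lambda>z. gam lam cv (SA z)) \<longlongrightarrow> gam lam cv yA) F" using gam_tendsto[OF SA yA cv] .
  have e1: "eventually (\<lambda>z. SA z \<in> P) F" using topological_tendstoD[OF SA P_open yA] .
  have e2: "eventually (\<lambda>z. \<forall>j\<in>{..<n}. snd ((Tmap lam d f (E z) ^^ j) (gam lam cv (SA z))) \<in> P \<and>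
            intr lam (ix j) (snd ((Tmap lam d f (E z) ^^ j) (gam lam cv (SA z)))) (fst ((Tmap lam d f (E z) ^^ j) (gam lam cv (SA z))))) F"
  proof (rule eventually_ball_finite, simp, intro ballI)
    fix j assume j: "j \<in> {..<n}"
    show "eventually (\<lambda>z. snd ((Tmap lam d f (E z) ^^ j) (gam lam cv (SA z))) \<in> P \<and>
            intr lam (ix j) (snd ((Tmap lam d f (E z) ^^ j) (gam lam cv (SA z)))) (fst ((Tmap lam d f (E z) ^^ j) (gam lam cv (SA z))))) F"
      by (rule iter_eventually_idx[OF E W]) (use j gd ixp in \<open>auto simp: good_def\<close>)
  qed
  show ?thesis
    by (rule that[of ix]) (use ixp e1 e2 in \<open>auto intro: eventually_conj\<close>)
qed

end

context iemctx begin

lemma main: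
  fixes y0 yA yB :: real and q nA nB :: nat and J :: "real set" and cA cB :: curve
    and pstar :: "real \<times> real" and vA vB :: "real \<times> real"
  assumes d2: "d \<ge> 2"
    and y0P: "y0 \<in> P"
    and Jper: "periodic_interval lam d y0 q J"
    and cA: "valid_curve d cA" and cB: "valid_curve d cB"
    and jq: "\<bar>jval cA nA - jval cB nB\<bar> = int q"
    and yAP: "yA \<in> P" and yBP: "yB \<in> P"
    and pstar_orb: "pstar \<in> {(Tmap lam d f 0 ^^ k) ((Inf J + Sup J) / 2, y0) | k. k < q}"
    and hitA: "(Tmap lam d f 0 ^^ nA) (gam lam cA yA) = pstar"
    and hitB: "(Tmap lam d f 0 ^^ nB) (gam lam cB yB) = pstar"
    and derA: "((\<lambda>y. (Tmap lam d f 0 ^^ nA) (gam lam cA y)) has_vector_derivative vA) (at yA)"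
    and derB: "((\<lambda>y. (Tmap lam d f 0 ^^ nB) (gam lam cB y)) has_vector_derivative vB) (at yB)"
    and indep: "fst vA * snd vB - snd vA * fst vB \<noteq> 0"
  shows "\<exists>eps0>0. \<exists>V :: (complex \<times> real) set. open V \<and> emb pstar \<in> V \<and>
           (\<exists>eta>0. \<exists>pe :: real \<Rightarrow> real \<times> real.
              pe 0 = pstar \<and> continuous_on {-eps0<..<eps0} (emb \<circ> pe) \<and>
              (\<forall>eps. \<bar>eps\<bar> < eps0 \<longrightarrow>
                 {p. fst p \<in> {0..<1} \<and> emb p \<in> V \<and>
                     (\<exists>y. \<bar>y - yA\<bar> < eta \<and> p = (Tmap lam d f eps ^^ nA) (gam lam cA y)) \<and>
                     (\<exists>y. \<bar>y - yB\<bar> < eta \<and> p = (Tmap lam d f eps ^^ nB) (gam lam cB y))}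
                   = {pe eps} \<and>
                 sym_per_orbit lam d f eps P q (pe eps)))"
proof -
  have per: "per_int_props lam d y0 q J" using Jper by (simp add: periodic_interval_def)
  obtain a b where ab: "a < b" and Jab: "J = {a..<b}" using per by (auto simp: per_int_props_def)
  have q0: "0 < q" using per by (simp add: per_int_props_def)
  have d1: "d \<ge> 1" using d2 by simp
  let ?c = "(a + b) / 2"
  let ?T = "Tmap lam d f" and ?F = "iem lam d y0"
  have perab: "per_int_props lam d y0 q {a..<b}" using per Jab by simp
  have IS: "(Inf J + Sup J) / 2 = ?c" using ab Jab by simp
  obtain m where m: "m < q" and pm: "pstar = (?T 0 ^^ m) (?c, y0)" using pstar_orb IS by auto
  have cpA: "yA = y0" "\<And>i. i \<le> nA \<Longrightarrow> good ((?T 0 ^^ i) (gam lam cA yA))"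
    using curve_points[OF d1 y0P perab ab cA yAP, of nA m] hitA pm by auto
  have cpB: "yB = y0" "\<And>i. i \<le> nB \<Longrightarrow> good ((?T 0 ^^ i) (gam lam cB yB))"
    using curve_points[OF d1 y0P perab ab cB yBP, of nB m] hitB pm by auto
  have pk: "(?T 0 ^^ k) pstar = ((?F ^^ (k + m)) ?c, y0)" for k
    using pm by (simp add: T0_iter funpow_add)
  have gstar: "good ((?T 0 ^^ k) pstar)" for k
    using pk orbit_good[OF y0P perab ab] by simp
  have minstar: "(?T 0 ^^ k) pstar \<noteq> pstar" if "0 < k" "k < q" for k
  proof
    assume h: "(?T 0 ^^ k) pstar = pstar"
    have "(?F ^^ (k + m)) ?c = (?F ^^ m) ?c" using h pk[of k] pk[of 0] by simp
    then have "(?F ^^ (q - m)) ((?F ^^ (k + m)) ?c) = (?F ^^ (q - m)) ((?F ^^ m) ?c)" by simp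
    moreover have "(?F ^^ (q - m)) ((?F ^^ (k + m)) ?c) = (?F ^^ (q - m + (k + m))) ?c" by (simp only: funpow_add o_apply)
    moreover have "(?F ^^ (q - m)) ((?F ^^ m) ?c) = (?F ^^ (q - m + m)) ?c" by (simp only: funpow_add o_apply)
    moreover have "q - m + (k + m) = k + q" "q - m + m = q" using m by auto
    ultimately have "(?F ^^ (k + q)) ?c = (?F ^^ q) ?c" by simp
    then have "(?F ^^ k) ((?F ^^ q) ?c) = (?F ^^ q) ?c" by (simp add: funpow_add)
    then have "(?F ^^ k) ?c = ?c" using Fq_c[OF y0P perab ab] by simp
    then show False using min_c[OF y0P perab ab that] by simp
  qed

  define z0 :: "real \<times> real \<times> real" where "z0 = (yA, yB, 0)"
  have tz: "((\<lambda>z::real \<times> real \<times> real. z) \<longlongrightarrow> z0) (nhds z0)" by (rule filterlim_ident)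
  have tSA: "((\<lambda>z::real \<times> real \<times> real. fst z) \<longlongrightarrow> yA) (nhds z0)"
    using tendsto_fst[OF tz] by (simp add: z0_def)
  have tSB: "((\<lambda>z::real \<times> real \<times> real. fst (snd z)) \<longlongrightarrow> yB) (nhds z0)"
    using tendsto_fst[OF tendsto_snd[OF tz]] by (simp add: z0_def)
  have tE: "((\<lambda>z::real \<times> real \<times> real. snd (snd z)) \<longlongrightarrow> 0) (nhds z0)"
    using tendsto_snd[OF tendsto_snd[OF tz]] by (simp add: z0_def)
  obtain iA where iA: "\<And>j. j < nA \<Longrightarrow> iA j \<in> {1..d}"
    and evA: "eventually (\<lambda>z. fst z \<in> P \<and> (\<forall>j\<in>{..<nA}. snd ((?T (snd (snd z)) ^^ j) (gam lam cA (fst z))) \<in> P \<and>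
            intr lam (iA j) (snd ((?T (snd (snd z)) ^^ j) (gam lam cA (fst z)))) (fst ((?T (snd (snd z)) ^^ j) (gam lam cA (fst z)))))) (nhds z0)"
  proof (rule curve_setup[where n=nA, OF cA yAP _ tSA tE])
    show "good ((?T 0 ^^ i) (gam lam cA yA))" if "i \<le> nA" for i using that by (rule cpA(2))
  qed (rule that)
  obtain iB where iB: "\<And>j. j < nB \<Longrightarrow> iB j \<in> {1..d}"
    and evB: "eventually (\<lambda>z. fst (snd z) \<in> P \<and> (\<forall>j\<in>{..<nB}. snd ((?T (snd (snd z)) ^^ j) (gam lam cB (fst (snd z)))) \<in> P \<and>
            intr lam (iB j) (snd ((?T (snd (snd z)) ^^ j) (gam lam cB (fst (snd z))))) (fst ((?T (snd (snd z)) ^^ j) (gam lam cB (fst (snd z))))))) (nhds z0)"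
  proof (rule curve_setup[where n=nB, OF cB yBP _ tSB tE])
    show "good ((?T 0 ^^ i) (gam lam cB yB))" if "i \<le> nB" for i using that by (rule cpB(2))
  qed (rule that)
  obtain r where r: "r > 0" and rr: "\<And>z. dist z z0 < r \<Longrightarrow>
      (fst z \<in> P \<and> (\<forall>j\<in>{..<nA}. snd ((?T (snd (snd z)) ^^ j) (gam lam cA (fst z))) \<in> P \<and>
            intr lam (iA j) (snd ((?T (snd (snd z)) ^^ j) (gam lam cA (fst z)))) (fst ((?T (snd (snd z)) ^^ j) (gam lam cA (fst z)))))) \<and>
      (fst (snd z) \<in> P \<and> (\<forall>j\<in>{..<nB}. snd ((?T (snd (snd z)) ^^ j) (gam lam cB (fst (snd z)))) \<in> P \<and>
            intr lam (iB j) (snd ((?T (snd (snd z)) ^^ j) (gam lam cB (fst (snd z))))) (fst ((?T (snd (snd z)) ^^ j) (gam lam cB (fst (snd z)))))))"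
    using eventually_conj[OF evA evB] unfolding eventually_nhds_metric by blast
  define U where "U = ball z0 r"
  have Uo: "open U" and z0U: "z0 \<in> U" using r by (auto simp: U_def)
  have rrU: "z \<in> U \<Longrightarrow> dist z z0 < r" for z by (simp add: U_def dist_commute)
  have OAeq: "(?T (snd (snd z)) ^^ k) (gam lam cA (fst z)) = orbXY lam d f iA cA (fst z) (snd (snd z)) k"
    if "z \<in> U" "k \<le> nA" for z k
    by (rule orb_eq) (use that rr[OF rrU[OF that(1)]] iA in auto)
  have OBeq: "(?T (snd (snd z)) ^^ k) (gam lam cB (fst (snd z))) = orbXY lam d f iB cB (fst (snd z)) (snd (snd z)) k"
    if "z \<in> U" "k \<le> nB" for z k
    by (rule orb_eq) (use that rr[OF rrU[OF that(1)]] iB in auto)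
  have blE: "bounded_linear (\<lambda>z::real \<times> real \<times> real. snd (snd z))"
    using bounded_linear_compose[OF bounded_linear_snd bounded_linear_snd] by simp
  have blSB: "bounded_linear (\<lambda>z::real \<times> real \<times> real. fst (snd z))"
    using bounded_linear_compose[OF bounded_linear_fst bounded_linear_snd] by simp
  have C1A: "C1on U (\<lambda>z. fst (orbXY lam d f iA cA (fst z) (snd (snd z)) nA)) \<and>
             C1on U (\<lambda>z. snd (orbXY lam d f iA cA (fst z) (snd (snd z)) nA))"
  proof (rule C1_orb[OF C1_linear[OF bounded_linear_fst] _ C1_linear[OF blE] cA iA])
    show "fst ` U \<subseteq> P" using rr rrU by blast
    fix z j assume zU: "z \<in> U" and j: "j < nA"
    have "snd ((?T (snd (snd z)) ^^ j) (gam lam cA (fst z))) \<in> P" using rr[OF rrU[OF zU]] j by blast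
    then show "snd (orbXY lam d f iA cA (fst z) (snd (snd z)) j) \<in> P"
      using OAeq[OF zU, of j] j by simp
  qed
  have C1B: "C1on U (\<lambda>z. fst (orbXY lam d f iB cB (fst (snd z)) (snd (snd z)) nB)) \<and>
             C1on U (\<lambda>z. snd (orbXY lam d f iB cB (fst (snd z)) (snd (snd z)) nB))"
  proof (rule C1_orb[OF C1_linear[OF blSB] _ C1_linear[OF blE] cB iB])
    show "(\<lambda>z. fst (snd z)) ` U \<subseteq> P" using rr rrU by blast
    fix z j assume zU: "z \<in> U" and j: "j < nB"
    have "snd ((?T (snd (snd z)) ^^ j) (gam lam cB (fst (snd z)))) \<in> P" using rr[OF rrU[OF zU]] j by blast
    then show "snd (orbXY lam d f iB cB (fst (snd z)) (snd (snd z)) j) \<in> P"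
      using OBeq[OF zU, of j] j by simp
  qed
  define OA where "OA z = orbXY lam d f iA cA (fst z) (snd (snd z)) nA" for z :: "real \<times> real \<times> real"
  define OB where "OB z = orbXY lam d f iB cB (fst (snd z)) (snd (snd z)) nB" for z :: "real \<times> real \<times> real"
  define G where "G z = (fst (OA z) - fst (OB z), snd (OA z) - snd (OB z), snd (snd z))" for z :: "real \<times> real \<times> real"
  have C1G: "C1on U G"
    unfolding G_def OA_def OB_def using C1A C1B C1_linear[OF blE]
    by (intro C1_pair C1_diff) auto
  obtain G' where dG: "\<And>x. x \<in> U \<Longrightarrow> (G has_derivative blinfun_apply (G' x)) (at x)"
    and cG: "continuous_on U G'" using C1G unfolding C1on_def by blast
  have OAz0: "OA z0 = pstar" using OAeq[OF z0U order.refl] hitA by (simp add: OA_def z0_def)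
  have Gz0: "G z0 = 0"
  proof -
    have "OB z0 = pstar" using OBeq[OF z0U order.refl] hitB by (simp add: OB_def z0_def)
    then show ?thesis using OAz0 by (simp add: G_def z0_def zero_prod_def)
  qed
  have LA: "G' z0 (h, 0, 0) = (h * fst vA, h * snd vA, 0)" for h
  proof (unfold z0_def, rule deriv_dirA[OF dG[OF z0U, unfolded z0_def] Uo z0U[unfolded z0_def] _ derA])
    fix s assume sU: "(s, yB, 0) \<in> U"
    have "OA (s, yB, 0) = (?T 0 ^^ nA) (gam lam cA s)" using OAeq[OF sU order.refl] by (simp add: OA_def)
    moreover have "OB (s, yB, 0) = pstar" using OBeq[OF sU order.refl] hitB by (simp add: OB_def)
    ultimately show "G (s, yB, 0) = (fst ((?T 0 ^^ nA) (gam lam cA s)) - fst pstar, snd ((?T 0 ^^ nA) (gam lam cA s)) - snd pstar, 0)"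
      by (simp add: G_def)
  qed
  have LB: "G' z0 (0, h, 0) = (- (h * fst vB), - (h * snd vB), 0)" for h
  proof (unfold z0_def, rule deriv_dirB[OF dG[OF z0U, unfolded z0_def] Uo z0U[unfolded z0_def] _ derB])
    fix t assume tU: "(yA, t, 0) \<in> U"
    have "OA (yA, t, 0) = pstar" using OAeq[OF tU order.refl] hitA by (simp add: OA_def)
    moreover have "OB (yA, t, 0) = (?T 0 ^^ nB) (gam lam cB t)" using OBeq[OF tU order.refl] by (simp add: OB_def)
    ultimately show "G (yA, t, 0) = (fst pstar - fst ((?T 0 ^^ nB) (gam lam cB t)), snd pstar - snd ((?T 0 ^^ nB) (gam lam cB t)), 0)"
      by (simp add: G_def)
  qed
  have LE: "snd (snd (G' z0 w)) = snd (snd w)" for w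
  proof -
    have d1: "((\<lambda>z. snd (snd (G z))) has_derivative (\<lambda>w. snd (snd (G' z0 w)))) (at z0)"
      using dG[OF z0U] by (intro has_derivative_snd)
    have d2: "((\<lambda>z. snd (snd (G z))) has_derivative (\<lambda>w::real \<times> real \<times> real. snd (snd w))) (at z0)"
      unfolding G_def using bounded_linear_imp_has_derivative[OF blE] by simp
    show ?thesis using fun_cong[OF has_derivative_unique[OF d1 d2], of w] by simp
  qed
  obtain invf where invf: "invf o\<^sub>L G' z0 = id_blinfun"
    using invertible_L[of "G' z0" "fst vA" "snd vA" "fst vB" "snd vB", OF LA LB LE indep] by blast
  obtain U' V g and g' :: "real \<times> real \<times> real \<Rightarrow> real \<times> real \<times> real \<Rightarrow> real \<times> real \<times> real" where U': "open U'" "U' \<subseteq> U" "z0 \<in> U'" and V: "open V" "G z0 \<in> V"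
    and hom: "homeomorphism U' V G g"
    and "\<And>y. y \<in> V \<Longrightarrow> (g has_derivative (g' y)) (at y)"
    and "\<And>y. y \<in> V \<Longrightarrow> g' y = inv (blinfun_apply (G' (g y)))"
    and "\<And>y. y \<in> V \<Longrightarrow> bij (blinfun_apply (G' (g y)))"
    by (rule inverse_function_theorem[OF Uo _ cG z0U invf]) (erule dG, rule that)

  from hom have hom1: "\<And>x. x \<in> U' \<Longrightarrow> g (G x) = x" and hom3: "\<And>y. y \<in> V \<Longrightarrow> G (g y) = y"
    and cg: "continuous_on V g" unfolding homeomorphism_def by auto
  obtain \<delta> where \<delta>: "\<delta> > 0" "ball z0 \<delta> \<subseteq> U'" using U'(1,3) open_contains_ball by blast
  define eta where "eta = \<delta> / 3"
  have eta0: "eta > 0" using \<delta> by (simp add: eta_def)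
  have box: "(s, t, e) \<in> U'" if "\<bar>s - yA\<bar> < eta" "\<bar>t - yB\<bar> < eta" "\<bar>e\<bar> < eta" for s t e
  proof -
    have "dist (s, t, e) z0 < \<delta>" using box_ball[OF that] by (simp add: z0_def eta_def)
    then show ?thesis using \<delta>(2) by (auto simp: dist_commute)
  qed
  have G0: "G z0 = (0, 0, 0)" using Gz0 by (simp add: zero_prod_def)
  have gz0: "g (0, 0, 0) = z0" using hom1[OF U'(3)] G0 by simp
  have V0: "(0, 0, 0) \<in> V" using V(2) G0 by simp
  define line where "line e = ((0::real), (0::real), e)" for e :: real
  have tid: "((\<lambda>e::real. e) \<longlongrightarrow> 0) (nhds 0)" by (rule filterlim_ident)
  have tline: "(line \<longlongrightarrow> (0, 0, 0)) (nhds 0)" unfolding line_def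
    by (intro tendsto_Pair tendsto_const tid)
  have isg: "isCont g (0, 0, 0)" using cg V(1) V0 continuous_on_eq_continuous_at by blast
  define zf where "zf e = g (line e)" for e
  have tzf: "(zf \<longlongrightarrow> z0) (nhds 0)" unfolding zf_def using isCont_tendsto_compose[OF isg tline] gz0 by simp
  have cOA: "continuous_on U OA"
  proof -
    have "C1on U (\<lambda>z. (fst (OA z), snd (OA z)))" using C1A unfolding OA_def by (intro C1_pair) auto
    then show ?thesis using C1_cont by fastforce
  qed
  have isOA: "isCont OA z0" using cOA Uo z0U continuous_on_eq_continuous_at by blast
  define pe where "pe e = OA (zf e)" for e
  have zf0: "zf 0 = z0" using gz0 by (simp add: zf_def line_def)
  have pe0: "pe 0 = pstar" using OAz0 zf0 by (simp add: pe_def)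
  have tpe: "(pe \<longlongrightarrow> pstar) (nhds 0)" unfolding pe_def using isCont_tendsto_compose[OF isOA tzf] OAz0 by simp
  have ev1: "eventually (\<lambda>e. line e \<in> V) (nhds 0)" using topological_tendstoD[OF tline V(1) V0] .
  have ev2: "eventually (\<lambda>e. dist (zf e) z0 < eta) (nhds 0)" using tendstoD[OF tzf eta0] .
  have ev3: "eventually (\<lambda>e. \<forall>k\<in>{..<q}. good ((?T e ^^ k) (pe e))) (nhds 0)"
  proof (rule eventually_ball_finite, simp, intro ballI)
    fix k show "eventually (\<lambda>e. good ((?T e ^^ k) (pe e))) (nhds 0)"
      by (rule iter_eventually[OF tid tpe]) (rule gstar)
  qed
  have ev4: "eventually (\<lambda>e. \<forall>k\<in>{0<..<q}. (?T e ^^ k) (pe e) \<noteq> pe e) (nhds 0)"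
  proof (rule eventually_ball_finite, simp, intro ballI)
    fix k assume k: "k \<in> {0<..<q}"
    have "((\<lambda>e. (?T e ^^ k) (pe e) - pe e) \<longlongrightarrow> (?T 0 ^^ k) pstar - pstar) (nhds 0)"
      by (intro tendsto_diff tpe iter_tendsto[OF tid tpe] gstar)
    moreover have "(?T 0 ^^ k) pstar - pstar \<noteq> 0" using minstar k by simp
    ultimately have "eventually (\<lambda>e. (?T e ^^ k) (pe e) - pe e \<noteq> 0) (nhds 0)"
      by (rule tendsto_imp_eventually_ne)
    then show "eventually (\<lambda>e. (?T e ^^ k) (pe e) \<noteq> pe e) (nhds 0)" by simp
  qed
  have ev5: "eventually (\<lambda>e. \<bar>e\<bar> < eta) (nhds 0)" using tendstoD[OF tid eta0] by simp
  obtain eps0 where eps0: "eps0 > 0" and epsP: "\<And>e. dist e 0 < eps0 \<Longrightarrow>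
      line e \<in> V \<and> dist (zf e) z0 < eta \<and> (\<forall>k\<in>{..<q}. good ((?T e ^^ k) (pe e))) \<and>
      (\<forall>k\<in>{0<..<q}. (?T e ^^ k) (pe e) \<noteq> pe e) \<and> \<bar>e\<bar> < eta"
    using eventually_conj[OF ev1 eventually_conj[OF ev2 eventually_conj[OF ev3 eventually_conj[OF ev4 ev5]]]]
    unfolding eventually_nhds_metric by blast

  have zfU': "zf e \<in> U'" if "dist (zf e) z0 < eta" for e
  proof -
    have "dist z0 (zf e) < \<delta>" using that \<delta> by (simp add: eta_def dist_commute)
    then show ?thesis using \<delta>(2) by auto
  qed
  have continuity: "continuous_on {-eps0<..<eps0} (emb \<circ> pe)"
  proof -
    have inI: "dist e 0 < eps0" if "e \<in> {-eps0<..<eps0}" for e using that by (auto simp: dist_real_def)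
    have czf: "continuous_on {-eps0<..<eps0} zf"
    proof -
      have "continuous_on {-eps0<..<eps0} line" unfolding line_def by (intro continuous_intros)
      moreover have "line ` {-eps0<..<eps0} \<subseteq> V" using epsP inI by blast
      ultimately show ?thesis unfolding zf_def using continuous_on_compose2[OF cg] by blast
    qed
    have zfU: "zf ` {-eps0<..<eps0} \<subseteq> U" using epsP inI zfU' U'(2) by blast
    have "continuous_on {-eps0<..<eps0} pe" unfolding pe_def using continuous_on_compose2[OF cOA czf zfU] .
    moreover have "continuous_on UNIV emb" unfolding emb_def by (intro continuous_intros)
    ultimately show ?thesis using continuous_on_compose continuous_on_subset by blast
  qed
  have key: "{p. fst p \<in> {0..<1} \<and> emb p \<in> (UNIV :: (complex \<times> real) set) \<and>
                     (\<exists>y. \<bar>y - yA\<bar> < eta \<and> p = (?T e ^^ nA) (gam lam cA y)) \<and>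
                     (\<exists>y. \<bar>y - yB\<bar> < eta \<and> p = (?T e ^^ nB) (gam lam cB y))}
                   = {pe e} \<and> sym_per_orbit lam d f e P q (pe e)" if e: "\<bar>e\<bar> < eps0" for e
  proof -
    have de: "dist e 0 < eps0" using e by simp
    have lV: "line e \<in> V" and dz: "dist (zf e) z0 < eta" and gd: "\<forall>k\<in>{..<q}. good ((?T e ^^ k) (pe e))"
      and mn: "\<forall>k\<in>{0<..<q}. (?T e ^^ k) (pe e) \<noteq> pe e" and ee: "\<bar>e\<bar> < eta" using epsP[OF de] by auto
    have zU': "zf e \<in> U'" using zfU'[OF dz] .
    have zU: "zf e \<in> U" using zU' U'(2) by auto
    have Gz: "G (zf e) = line e" using hom3[OF lV] by (simp add: zf_def)
    have Ez: "snd (snd (zf e)) = e" using Gz by (simp add: G_def line_def)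
    have OAB: "OA (zf e) = OB (zf e)" using Gz by (simp add: G_def line_def prod_eq_iff)
    have peA: "pe e = (?T e ^^ nA) (gam lam cA (fst (zf e)))"
      using OAeq[OF zU order.refl] Ez by (simp add: pe_def OA_def)
    have peB: "pe e = (?T e ^^ nB) (gam lam cB (fst (snd (zf e))))"
      using OBeq[OF zU order.refl] Ez OAB by (simp add: pe_def OB_def)
    have dA: "\<bar>fst (zf e) - yA\<bar> < eta"
      using dist_fst_le[of "zf e" z0] dz by (simp add: z0_def dist_real_def)
    have dB: "\<bar>fst (snd (zf e)) - yB\<bar> < eta"
      using dist_fst_le[of "snd (zf e)" "snd z0"] dist_snd_le[of "zf e" z0] dz by (simp add: z0_def dist_real_def)
    have gp: "good (pe e)" using gd q0 by (metis funpow_0 lessThan_iff)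
    have set_eq: "{p. fst p \<in> {0..<1} \<and> emb p \<in> (UNIV :: (complex \<times> real) set) \<and>
                     (\<exists>y. \<bar>y - yA\<bar> < eta \<and> p = (?T e ^^ nA) (gam lam cA y)) \<and>
                     (\<exists>y. \<bar>y - yB\<bar> < eta \<and> p = (?T e ^^ nB) (gam lam cB y))} = {pe e}"
    proof (rule set_eqI, rule iffI)
      fix p assume "p \<in> {p. fst p \<in> {0..<1} \<and> emb p \<in> (UNIV :: (complex \<times> real) set) \<and>
                     (\<exists>y. \<bar>y - yA\<bar> < eta \<and> p = (?T e ^^ nA) (gam lam cA y)) \<and>
                     (\<exists>y. \<bar>y - yB\<bar> < eta \<and> p = (?T e ^^ nB) (gam lam cB y))}"
      then obtain y1 y2 where y1: "\<bar>y1 - yA\<bar> < eta" "p = (?T e ^^ nA) (gam lam cA y1)"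
        and y2: "\<bar>y2 - yB\<bar> < eta" "p = (?T e ^^ nB) (gam lam cB y2)" by blast
      have zU'2: "(y1, y2, e) \<in> U'" using box y1(1) y2(1) ee by simp
      have zU2: "(y1, y2, e) \<in> U" using U'(2) zU'2 by auto
      have oa: "OA (y1, y2, e) = p" using OAeq[OF zU2 order.refl] y1 by (simp add: OA_def)
      moreover have "OB (y1, y2, e) = p" using OBeq[OF zU2 order.refl] y2 by (simp add: OB_def)
      ultimately have "G (y1, y2, e) = line e" by (simp add: G_def line_def)
      then have "(y1, y2, e) = zf e" using hom1[OF zU'2] by (simp add: zf_def)
      then show "p \<in> {pe e}" using oa by (simp add: pe_def)
    next
      fix p assume "p \<in> {pe e}"
      then have p: "p = pe e" by simp
      show "p \<in> {p. fst p \<in> {0..<1} \<and> emb p \<in> (UNIV :: (complex \<times> real) set) \<and>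
                     (\<exists>y. \<bar>y - yA\<bar> < eta \<and> p = (?T e ^^ nA) (gam lam cA y)) \<and>
                     (\<exists>y. \<bar>y - yB\<bar> < eta \<and> p = (?T e ^^ nB) (gam lam cB y))}"
        using good_01[OF gp] p peA peB dA dB by auto
    qed
    have rrz: "fst (zf e) \<in> P \<and> (\<forall>j\<in>{..<nA}. snd ((?T e ^^ j) (gam lam cA (fst (zf e)))) \<in> P \<and>
            intr lam (iA j) (snd ((?T e ^^ j) (gam lam cA (fst (zf e))))) (fst ((?T e ^^ j) (gam lam cA (fst (zf e)))))) \<and>
      (fst (snd (zf e)) \<in> P \<and> (\<forall>j\<in>{..<nB}. snd ((?T e ^^ j) (gam lam cB (fst (snd (zf e))))) \<in> P \<and>
            intr lam (iB j) (snd ((?T e ^^ j) (gam lam cB (fst (snd (zf e)))))) (fst ((?T e ^^ j) (gam lam cB (fst (snd (zf e))))))))"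
      using rr[OF rrU[OF zU]] Ez by simp
    have gdA: "good ((?T e ^^ i) (gam lam cA (fst (zf e))))" if "i < nA" for i
      using rrz iA[OF that] that unfolding good_def by auto
    have gdB: "good ((?T e ^^ i) (gam lam cB (fst (snd (zf e)))))" if "i < nB" for i
      using rrz iB[OF that] that unfolding good_def by auto
    have sA: "fst (zf e) \<in> P" and sB: "fst (snd (zf e)) \<in> P" using rrz by auto
    have rA: "(jval cA nA \<ge> 0 \<and> pe e = (?T e ^^ nat (jval cA nA)) (Smap f e (pe e))) \<or> (jval cA nA = -1 \<and> Smap f e (pe e) = ?T e (pe e))"
      by (rule curve_rel[OF cA sA peA _ gp]) (erule gdA)
    have rB: "(jval cB nB \<ge> 0 \<and> pe e = (?T e ^^ nat (jval cB nB)) (Smap f e (pe e))) \<or> (jval cB nB = -1 \<and> Smap f e (pe e) = ?T e (pe e))"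
      by (rule curve_rel[OF cB sB peB _ gp]) (erule gdB)
    have perq: "(?T e ^^ q) (pe e) = pe e" by (rule period_from_rel[where T="?T e" and S="Smap f e" and p="pe e", OF q0 jq rA rB])
    have goodk: "good ((?T e ^^ k) (pe e))" for k
    proof -
      have "(?T e ^^ k) (pe e) = (?T e ^^ (k mod q)) (pe e)" by (rule funpow_mod[OF perq])
      moreover have "k mod q < q" using q0 by simp
      ultimately show ?thesis using gd by simp
    qed
    have rel: "(\<exists>j. pe e = (?T e ^^ j) (Smap f e (pe e))) \<or> Smap f e (pe e) = ?T e (pe e)"
      using rA by blast
    have sym: "Smap f e ` {(?T e ^^ k) (pe e) | k. k < q} = {(?T e ^^ k) (pe e) | k. k < q}"
    proof (rule sym_orbit_abstract[where T="?T e" and S="Smap f e" and p="pe e", OF q0 perq _ _ rel])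
      fix k show "?T e (Smap f e (?T e ((?T e ^^ k) (pe e)))) = Smap f e ((?T e ^^ k) (pe e))"
        by (rule TST_good[OF goodk])
      show "Smap f e (Smap f e ((?T e ^^ k) (pe e))) = (?T e ^^ k) (pe e)"
        using S_invol good_01[OF goodk] by blast
    qed
    have spo: "sym_per_orbit lam d f e P q (pe e)"
      unfolding sym_per_orbit_def
      using good_01[OF gp] q0 perq mn goodk sym by (auto simp: good_def)
    show ?thesis using set_eq spo by simp
  qed
  show ?thesis
    apply (rule exI[of _ eps0])
    apply (rule conjI[OF eps0])
    apply (rule exI[of _ "UNIV :: (complex \<times> real) set"])
    apply (intro conjI open_UNIV UNIV_I)
    apply (rule exI[of _ eta])
    apply (rule conjI[OF eta0])
    apply (rule exI[of _ pe])
    apply (intro conjI pe0 continuity allI impI)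
    using key by auto
qed

end
theorem mainTheorem12:
  fixes d :: nat and P :: "real set" and lam :: "nat \<Rightarrow> real \<Rightarrow> real" and f :: "real \<Rightarrow> real"
    and y0 yA yB :: real and q nA nB :: nat and J :: "real set" and cA cB :: curve
    and pstar :: "real \<times> real" and vA vB :: "real \<times> real"
  assumes d2: "d \<ge> 2"
    and P_int: "is_interval P" and P_open: "open P" and P_ne: "P \<noteq> {}"
    and lam_pos: "\<And>i y. i \<in> {1..d} \<Longrightarrow> y \<in> P \<Longrightarrow> lam i y > 0"
    and lam_sum: "\<And>y. y \<in> P \<Longrightarrow> (\<Sum>i\<in>{1..d}. lam i y) = 1"
    and lam_smooth: "\<And>i. i \<in> {1..d} \<Longrightarrow> smooth_on P (lam i)"
    and f_smooth: "smooth_on UNIV f"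
    and f_per: "\<And>x. f (x + 1) = f x"
    and f_odd: "\<And>x. f (- x) = - f x"
    and y0P: "y0 \<in> P"
    and Jper: "periodic_interval lam d y0 q J"
    and cA: "valid_curve d cA" and cB: "valid_curve d cB"
    and jq: "\<bar>jval cA nA - jval cB nB\<bar> = int q"
    and yAP: "yA \<in> P" and yBP: "yB \<in> P"
    and pstar_orb: "pstar \<in> {(Tmap lam d f 0 ^^ k) ((Inf J + Sup J) / 2, y0) | k. k < q}"
    and hitA: "(Tmap lam d f 0 ^^ nA) (gam lam cA yA) = pstar"
    and hitB: "(Tmap lam d f 0 ^^ nB) (gam lam cB yB) = pstar"
    and constA: "\<exists>r>0. \<forall>k<nA. \<exists>i\<in>{1..d}. \<forall>y eps. \<bar>y - yA\<bar> < r \<and> \<bar>eps\<bar> < r \<longrightarrow>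
                   fst ((Tmap lam d f eps ^^ k) (gam lam cA y))
                     \<in> elemJ lam i (snd ((Tmap lam d f eps ^^ k) (gam lam cA y)))"
    and constB: "\<exists>r>0. \<forall>k<nB. \<exists>i\<in>{1..d}. \<forall>y eps. \<bar>y - yB\<bar> < r \<and> \<bar>eps\<bar> < r \<longrightarrow>
                   fst ((Tmap lam d f eps ^^ k) (gam lam cB y))
                     \<in> elemJ lam i (snd ((Tmap lam d f eps ^^ k) (gam lam cB y)))"
    and derA: "((\<lambda>y. (Tmap lam d f 0 ^^ nA) (gam lam cA y)) has_vector_derivative vA) (at yA)"
    and derB: "((\<lambda>y. (Tmap lam d f 0 ^^ nB) (gam lam cB y)) has_vector_derivative vB) (at yB)"
    and indep: "fst vA * snd vB - snd vA * fst vB \<noteq> 0"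
  shows "\<exists>eps0>0. \<exists>V :: (complex \<times> real) set. open V \<and> emb pstar \<in> V \<and>
           (\<exists>eta>0. \<exists>pe :: real \<Rightarrow> real \<times> real.
              pe 0 = pstar \<and> continuous_on {-eps0<..<eps0} (emb \<circ> pe) \<and>
              (\<forall>eps. \<bar>eps\<bar> < eps0 \<longrightarrow>
                 {p. fst p \<in> {0..<1} \<and> emb p \<in> V \<and>
                     (\<exists>y. \<bar>y - yA\<bar> < eta \<and> p = (Tmap lam d f eps ^^ nA) (gam lam cA y)) \<and>
                     (\<exists>y. \<bar>y - yB\<bar> < eta \<and> p = (Tmap lam d f eps ^^ nB) (gam lam cB y))}
                   = {pe eps} \<and>
                 sym_per_orbit lam d f eps P q (pe eps)))"
proof -
  interpret iemctx lam d P f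
    by unfold_locales (use P_open lam_pos lam_sum lam_smooth f_smooth f_per f_odd in auto)
  show ?thesis by (rule main[OF d2 y0P Jper cA cB jq yAP yBP pstar_orb hitA hitB derA derB indep])
qed

end
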